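(* Let $\ell_1$ and $\ell_2$ be two lines of a Desargues affine plane, let $O,I$ be distinct points of $\ell_1$, and let $P_P:\ell_1\to\ell_2$ be a parallel projection. Put $O'=P_P(O)$, $I'=P_P(I)$. Then for all points $A,B,C,D\in\ell_1$ with $A\neq D$ and $B\neq C$, \[ P_P\big(c_r(A,B;C,D)\big)=c_r'\big(P_P(A),P_P(B);P_P(C),P_P(D)\big), \] where $c_r$ is the cross ratio computed in the skew field of $\ell_1$ with zero $O$ and unit $I$, and $c_r'$ is the cross ratio computed in the skew field of $\ell_2$ with zero $O'$ and unit $I'$.
   Context: A Desargues affine plane is an affine plane (any two distinct points lie on exactly one line; through a point not on a line $\ell$ there is exactly one line missing $\ell$; there are three non-collinear points) in which Desargues' axiom holds (both when the lines joining corresponding vertices of the two triangles are parallel and when they are concurrent). For distinct points $O,I$ on a line $\ell^{OI}$ and a point $X$ and line $m$, let $\ell^{X}_{m}$ denote the line through $X$ parallel to $m$. Addition of $A,B\in\ell^{OI}$: choose $B_1\notin\ell^{OI}$, let $P_1=\ell^{B_1}_{OI}\cap\ell^{A}_{OB_1}$, and set $A+B=\ell^{P_1}_{BB_1}\cap\ell^{OI}$. Multiplication: choose $B_1\notin\ell^{OI}$, let $P_1=\ell^{A}_{IB_1}\cap\ell^{OB_1}$, and set $A\cdot B=\ell^{P_1}_{BB_1}\cap\ell^{OI}$. With these operations $(\ell^{OI},+,\cdot)$ is a skew field with zero $O$ and unit $I$; $-X$, $X^{-1}$ denote inverses and $X-Y=X+(-Y)$. The cross ratio (w.r.t. base points $O,I$)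 of $A,B,C,D$ with $A\neq D$, $B\neq C$ is $c_r(A,B;C,D)=\big[(A-D)^{-1}(B-D)\big]\big[(B-C)^{-1}(A-C)\big]$. A parallel projection between lines $\ell_1,\ell_2$ is a map $P_P:\ell_1\to\ell_2$ such that for all $A,B\in\ell_1$ the lines $A\,P_P(A)$ and $B\,P_P(B)$ are parallel (all such connecting lines have one common direction); it is a bijection. *)

theory Defs
  imports Main
begin

definition line_through :: "'p set set \<Rightarrow> 'p \<Rightarrow> 'p \<Rightarrow> 'p set" where
  "line_through L P Q = (THE l. l \<in> L \<and> P \<in> l \<and> Q \<in> l)"

definition parallel :: "'p set set \<Rightarrow> 'p set \<Rightarrow> 'p set \<Rightarrow> bool" where
  "parallel L l m \<longleftrightarrow> l \<in> L \<and> m \<in> L \<and> (l = m \<or> l \<inter> m = {})"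

definition par_through :: "'p set set \<Rightarrow> 'p \<Rightarrow> 'p set \<Rightarrow> 'p set" where
  "par_through L X m = (THE l. l \<in> L \<and> X \<in> l \<and> parallel L l m)"

definition meet :: "'p set \<Rightarrow> 'p set \<Rightarrow> 'p" where
  "meet l m = (THE P. P \<in> l \<and> P \<in> m)"

definition collinear3 :: "'p set set \<Rightarrow> 'p \<Rightarrow> 'p \<Rightarrow> 'p \<Rightarrow> bool" where
  "collinear3 L A B C \<longleftrightarrow> (\<exists>l\<in>L. A \<in> l \<and> B \<in> l \<and> C \<in> l)"

definition affine_plane :: "'p set set \<Rightarrow> bool" where
  "affine_plane L \<longleftrightarrow>
     (\<forall>P Q. P \<noteq> Q \<longrightarrow> (\<exists>!l. l \<in> L \<and> P \<in> l \<and> Q \<in> l)) \<and>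
     (\<forall>l\<in>L. \<forall>P. P \<notin> l \<longrightarrow> (\<exists>!m. m \<in> L \<and> P \<in> m \<and> m \<inter> l = {})) \<and>
     (\<exists>A B C. \<not> collinear3 L A B C)"

definition desargues :: "'p set set \<Rightarrow> bool" where
  "desargues L \<longleftrightarrow>
    (\<forall>A B C A' B' C'.
       \<not> collinear3 L A B C \<and> \<not> collinear3 L A' B' C' \<and>
       A \<noteq> A' \<and> B \<noteq> B' \<and> C \<noteq> C' \<and>
       line_through L A A' \<noteq> line_through L B B' \<and>
       line_through L A A' \<noteq> line_through L C C' \<and>
       line_through L B B' \<noteq> line_through L C C' \<and>
       ((parallel L (line_through L A A') (line_through L B B') \<and>
         parallel L (line_through L A A') (line_through L C C')) \<or>
        (\<exists>P. P \<in> line_through L A A' \<and> P \<in> line_through L B B' \<and> P \<in> line_through L C C')) \<and>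
       parallel L (line_through L A B) (line_through L A' B') \<and>
       parallel L (line_through L B C) (line_through L B' C')
     \<longrightarrow> parallel L (line_through L A C) (line_through L A' C'))"

definition desargues_affine_plane :: "'p set set \<Rightarrow> bool" where
  "desargues_affine_plane L \<longleftrightarrow> affine_plane L \<and> desargues L"

text \<open>Skew field operations on the line through Z and U (the auxiliary point B1
  is chosen once and for all; the result does not depend on the choice).\<close>
definition aux_point :: "'p set \<Rightarrow> 'p" where
  "aux_point l = (SOME X. X \<notin> l)"

definition add_pt :: "'p set set \<Rightarrow> 'p \<Rightarrow> 'p \<Rightarrow> 'p \<Rightarrow> 'p \<Rightarrow> 'p" where
  "add_pt L Z U A B =
    (let l = line_through L Z U; B1 = aux_point l;
         P1 = meet (par_through L B1 l) (par_through L A (line_through L Z B1))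
     in meet (par_through L P1 (line_through L B B1)) l)"

definition mul_pt :: "'p set set \<Rightarrow> 'p \<Rightarrow> 'p \<Rightarrow> 'p \<Rightarrow> 'p \<Rightarrow> 'p" where
  "mul_pt L Z U A B =
    (let l = line_through L Z U; B1 = aux_point l;
         P1 = meet (par_through L A (line_through L U B1)) (line_through L Z B1)
     in meet (par_through L P1 (line_through L B B1)) l)"

definition neg_pt :: "'p set set \<Rightarrow> 'p \<Rightarrow> 'p \<Rightarrow> 'p \<Rightarrow> 'p" where
  "neg_pt L Z U X = (THE Y. Y \<in> line_through L Z U \<and> add_pt L Z U X Y = Z)"

definition inv_pt :: "'p set set \<Rightarrow> 'p \<Rightarrow> 'p \<Rightarrow> 'p \<Rightarrow> 'p" where
  "inv_pt L Z U X = (THE Y. Y \<in> line_through L Z U \<and> mul_pt L Z U X Y = U)"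

definition sub_pt :: "'p set set \<Rightarrow> 'p \<Rightarrow> 'p \<Rightarrow> 'p \<Rightarrow> 'p \<Rightarrow> 'p" where
  "sub_pt L Z U X Y = add_pt L Z U X (neg_pt L Z U Y)"

definition cross_ratio :: "'p set set \<Rightarrow> 'p \<Rightarrow> 'p \<Rightarrow> 'p \<Rightarrow> 'p \<Rightarrow> 'p \<Rightarrow> 'p \<Rightarrow> 'p" where
  "cross_ratio L Z U A B C D =
     mul_pt L Z U
       (mul_pt L Z U (inv_pt L Z U (sub_pt L Z U A D)) (sub_pt L Z U B D))
       (mul_pt L Z U (inv_pt L Z U (sub_pt L Z U B C)) (sub_pt L Z U A C))"

definition parallel_projection :: "'p set set \<Rightarrow> 'p set \<Rightarrow> 'p set \<Rightarrow> ('p \<Rightarrow> 'p) \<Rightarrow> bool" where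
  "parallel_projection L l1 l2 f \<longleftrightarrow>
     (\<exists>d\<in>L. \<not> parallel L d l1 \<and>
        (\<forall>X\<in>l1. f X \<in> l2 \<and> f X \<in> par_through L X d))"

end

theory Submission
  imports Defs
begin

locale dap =
  fixes L :: "'p set set"
  assumes dap: "desargues_affine_plane L"
    and two: "\<exists>P Q::'p. P \<noteq> Q"
begin

abbreviation ln where "ln \<equiv> line_through L"
abbreviation par where "par \<equiv> par_through L"
abbreviation prl where "prl \<equiv> parallel L"

lemma aff: "affine_plane L" using dap by (simp add: desargues_affine_plane_def)
lemma des: "desargues L" using dap by (simp add: desargues_affine_plane_def)

lemma ax1: "P \<noteq> Q \<Longrightarrow> \<exists>!l. l \<in> L \<and> P \<in> l \<and> Q \<in> l"
  using aff unfolding affine_plane_def by (elim conjE) (erule allE, erule allE, erule mp)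

lemma ax2: "l \<in> L \<Longrightarrow> P \<notin> l \<Longrightarrow> \<exists>!m. m \<in> L \<and> P \<in> m \<and> m \<inter> l = {}"
  using aff unfolding affine_plane_def by (elim conjE) (erule ballE, erule allE, erule mp, simp_all)

lemma ax3: "\<exists>A B C. \<not> collinear3 L A B C"
  using aff unfolding affine_plane_def by (elim conjE)

lemma ln: "P \<noteq> Q \<Longrightarrow> ln P Q \<in> L \<and> P \<in> ln P Q \<and> Q \<in> ln P Q"
  unfolding line_through_def using theI'[OF ax1] by blast

lemma ln_unique: "P \<noteq> Q \<Longrightarrow> l \<in> L \<Longrightarrow> P \<in> l \<Longrightarrow> Q \<in> l \<Longrightarrow> ln P Q = l"
  unfolding line_through_def using the1_equality[OF ax1] by blast

lemma ln_sym: "ln P Q = ln Q P"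
  unfolding line_through_def by (simp add: conj_commute conj_left_commute)

lemma two_pts: "l \<in> L \<Longrightarrow> m \<in> L \<Longrightarrow> P \<in> l \<Longrightarrow> P \<in> m \<Longrightarrow> Q \<in> l \<Longrightarrow> Q \<in> m \<Longrightarrow> P \<noteq> Q \<Longrightarrow> l = m"
  using ln_unique[of P Q l] ln_unique[of P Q m] by simp

lemma prl_refl: "l \<in> L \<Longrightarrow> prl l l" unfolding parallel_def by auto
lemma prl_sym: "prl l m \<Longrightarrow> prl m l" unfolding parallel_def by auto
lemma prl_L: "prl l m \<Longrightarrow> l \<in> L \<and> m \<in> L" unfolding parallel_def by auto
lemma prl_meet: "prl l m \<Longrightarrow> P \<in> l \<Longrightarrow> P \<in> m \<Longrightarrow> l = m" unfolding parallel_def by auto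

lemma prl_trans: assumes "prl a b" "prl b c" shows "prl a c"
proof (rule ccontr)
  assume n: "\<not> prl a c"
  have L: "a \<in> L" "b \<in> L" "c \<in> L" using assms prl_L by auto
  then obtain P where P: "P \<in> a" "P \<in> c" "a \<noteq> c" using n unfolding parallel_def by auto
  show False
  proof (cases "P \<in> b")
    case True
    then show ?thesis using prl_meet[OF assms(1)] prl_meet[OF assms(2)] P by auto
  next
    case False
    have "a \<inter> b = {}" using assms(1) False P unfolding parallel_def by auto
    moreover have "c \<inter> b = {}" using assms(2) False P unfolding parallel_def by auto
    ultimately show False using ax2[OF L(2) False] P L by blast
  qed
qed

lemma par_ex: assumes "l \<in> L" shows "\<exists>!m. m \<in> L \<and> X \<in> m \<and> prl m l"
proof (cases "X \<in> l")
  case True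
  show ?thesis
  proof
    show "l \<in> L \<and> X \<in> l \<and> prl l l" using True assms prl_refl by auto
    fix m assume "m \<in> L \<and> X \<in> m \<and> prl m l"
    then show "m = l" using prl_meet True by blast
  qed
next
  case False
  then obtain m where m: "m \<in> L" "X \<in> m" "m \<inter> l = {}" using ax2[OF assms] by blast
  show ?thesis
  proof
    show "m \<in> L \<and> X \<in> m \<and> prl m l" using m assms unfolding parallel_def by auto
    fix m' assume a: "m' \<in> L \<and> X \<in> m' \<and> prl m' l"
    then have "m' \<inter> l = {}" using False unfolding parallel_def by auto
    then show "m' = m" using ax2[OF assms False] a m by blast
  qed
qed

lemma par: "l \<in> L \<Longrightarrow> par X l \<in> L \<and> X \<in> par X l \<and> prl (par X l) l"
  unfolding par_through_def using theI'[OF par_ex] by blast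

lemma par_unique: "l \<in> L \<Longrightarrow> m \<in> L \<Longrightarrow> X \<in> m \<Longrightarrow> prl m l \<Longrightarrow> par X l = m"
  unfolding par_through_def using the1_equality[OF par_ex] by blast

lemma par_self: "l \<in> L \<Longrightarrow> X \<in> l \<Longrightarrow> par X l = l"
  using par_unique prl_refl by blast

lemma par_prl: assumes "prl l m" shows "par X l = par X m"
proof -
  have L: "l \<in> L" "m \<in> L" using prl_L[OF assms] by auto
  have "prl (par X l) m" using prl_trans par[OF L(1)] assms by blast
  then show ?thesis using par_unique[OF L(2)] par[OF L(1)] by blast
qed

lemma par_mem: "l \<in> L \<Longrightarrow> Y \<in> par X l \<Longrightarrow> par Y l = par X l"
  using par[of l X] par_unique[of l "par X l" Y] by blast

lemma meet_ex: assumes "l \<in> L" "m \<in> L" "\<not> prl l m" shows "\<exists>!P. P \<in> l \<and> P \<in> m"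
proof -
  obtain P where P: "P \<in> l" "P \<in> m" "l \<noteq> m" using assms unfolding parallel_def by auto
  show ?thesis using P two_pts[OF assms(1,2)] by blast
qed

lemma meet: "l \<in> L \<Longrightarrow> m \<in> L \<Longrightarrow> \<not> prl l m \<Longrightarrow> meet l m \<in> l \<and> meet l m \<in> m"
  unfolding meet_def using theI'[OF meet_ex] by blast

lemma meet_unique: "l \<in> L \<Longrightarrow> m \<in> L \<Longrightarrow> \<not> prl l m \<Longrightarrow> P \<in> l \<Longrightarrow> P \<in> m \<Longrightarrow> meet l m = P"
  unfolding meet_def using the1_equality[OF meet_ex] by blast

lemma meet_comm: "meet l m = meet m l"
  unfolding meet_def by (simp add: conj_commute)

lemma not_prl: "l \<in> L \<Longrightarrow> m \<in> L \<Longrightarrow> P \<in> l \<Longrightarrow> P \<in> m \<Longrightarrow> l \<noteq> m \<Longrightarrow> \<not> prl l m"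
  using prl_meet by blast

lemma off_line: "l \<in> L \<Longrightarrow> \<exists>X. X \<notin> l"
  using ax3 unfolding collinear3_def by blast

lemma aux_point: "l \<in> L \<Longrightarrow> aux_point l \<notin> l"
  unfolding aux_point_def using off_line by (metis someI_ex)

lemma collinear_iff: "A \<noteq> B \<Longrightarrow> collinear3 L A B C \<longleftrightarrow> C \<in> ln A B"
  unfolding collinear3_def using ln[of A B] ln_unique[of A B] by blast

lemma par_mem_iff: assumes "e \<in> L" "X \<noteq> Y" shows "Y \<in> par X e \<longleftrightarrow> prl (ln X Y) e"
proof
  assume "Y \<in> par X e"
  then have "ln X Y = par X e" using ln_unique[OF assms(2)] par[OF assms(1)] by blast
  then show "prl (ln X Y) e" using par[OF assms(1)] by simp
next
  assume "prl (ln X Y) e"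
  then have "par X e = ln X Y" using par_unique[OF assms(1)] ln[OF assms(2)] by blast
  then show "Y \<in> par X e" using ln[OF assms(2)] by simp
qed

lemma ln_par: "e \<in> L \<Longrightarrow> X \<noteq> Y \<Longrightarrow> Y \<in> par X e \<Longrightarrow> ln X Y = par X e"
  using ln_unique[of X Y "par X e"] par[of e X] by blast


lemma other_pt: "\<exists>Q. Q \<noteq> (P::'p)"
  using two by metis

lemma two_lines_avoid: assumes "Q \<noteq> P"
  shows "\<exists>n1 n2. n1 \<in> L \<and> n2 \<in> L \<and> n1 \<noteq> n2 \<and> Q \<in> n1 \<and> Q \<in> n2 \<and> P \<notin> n1 \<and> P \<notin> n2"
proof -
  have l: "ln P Q \<in> L" "P \<in> ln P Q" "Q \<in> ln P Q" using ln assms by metis+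
  obtain R where R: "R \<notin> ln P Q" using off_line[OF l(1)] by blast
  have RP: "R \<noteq> P" "R \<noteq> Q" using R l by auto
  have n1: "ln Q R \<in> L" "Q \<in> ln Q R" "R \<in> ln Q R" using ln RP by metis+
  have Pn1: "P \<notin> ln Q R"
  proof
    assume "P \<in> ln Q R"
    then have "ln P Q = ln Q R" using ln_unique[OF assms[symmetric] n1(1)] n1 by (metis ln_sym)
    then show False using R n1 by simp
  qed
  have m: "ln P R \<in> L" "P \<in> ln P R" "R \<in> ln P R" using ln RP by metis+
  have Qm: "Q \<notin> ln P R"
  proof
    assume "Q \<in> ln P R"
    then have "ln P Q = ln P R" using ln_unique[OF assms[symmetric] m(1)] m by simp
    then show False using R m by simp
  qed
  define n2 where "n2 = par Q (ln P R)"
  have n2: "n2 \<in> L" "Q \<in> n2" "prl n2 (ln P R)" using par[OF m(1)] n2_def by auto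
  have d: "n2 \<inter> ln P R = {}" using n2 Qm unfolding parallel_def by auto
  have "n2 \<noteq> ln Q R" using d n1 m by auto
  moreover have "P \<notin> n2" using d m by auto
  ultimately show ?thesis using n1 n2 Pn1 by metis
qed

lemma line_two: assumes "l \<in> L" shows "\<exists>P Q. P \<noteq> Q \<and> P \<in> l \<and> Q \<in> l"
proof (rule ccontr)
  assume a: "\<not> ?thesis"
  obtain P Q where PQ: "Q \<noteq> P" "Q \<notin> l" "l \<subseteq> {P}"
  proof (cases "l = {}")
    case True
    obtain P Q :: 'p where "P \<noteq> Q" using two by blast
    then show ?thesis using that True by blast
  next
    case False
    then obtain P where "P \<in> l" by blast
    moreover obtain Q where "Q \<noteq> P" using other_pt by blast
    ultimately show ?thesis using that a by blast
  qed
  obtain n1 n2 where n: "n1 \<in> L" "n2 \<in> L" "n1 \<noteq> n2" "Q \<in> n1" "Q \<in> n2" "P \<notin> n1" "P \<notin> n2"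
    using two_lines_avoid[OF PQ(1)] by blast
  have "n1 \<inter> l = {}" "n2 \<inter> l = {}" using n PQ by auto
  then show False using ax2[OF assms PQ(2)] n by blast
qed

lemma line_other: assumes "l \<in> L" "P \<in> l" shows "\<exists>Q. Q \<in> l \<and> Q \<noteq> P"
  using line_two[OF assms(1)] by metis

lemma prl_ne: "prl l m \<Longrightarrow> l \<noteq> m \<Longrightarrow> P \<in> l \<Longrightarrow> P \<notin> m"
  using prl_meet by blast

definition proj where "proj b e X = meet (par X e) b"

lemma proj: assumes "b \<in> L" "e \<in> L" "\<not> prl e b"
  shows "proj b e X \<in> b \<and> proj b e X \<in> par X e"
proof -
  have "\<not> prl (par X e) b"
    using prl_trans[OF prl_sym[OF conjunct2[OF conjunct2[OF par[OF assms(2)]]]]] assms(3) by blast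
  then show ?thesis unfolding proj_def using meet[of "par X e" b] par[OF assms(2)] assms meet_comm by blast
qed

lemma proj_eq: assumes "b \<in> L" "e \<in> L" "\<not> prl e b" "Y \<in> b" "Y \<in> par X e"
  shows "proj b e X = Y"
proof -
  have "\<not> prl (par X e) b"
    using prl_trans[OF prl_sym[OF conjunct2[OF conjunct2[OF par[OF assms(2)]]]]] assms(3) by blast
  then show ?thesis unfolding proj_def using meet_unique[of "par X e" b Y] par[OF assms(2)] assms by blast
qed

lemma proj_on: "b \<in> L \<Longrightarrow> e \<in> L \<Longrightarrow> \<not> prl e b \<Longrightarrow> X \<in> b \<Longrightarrow> proj b e X = X"
  using proj_eq par by blast

lemma proj_par: "b \<in> L \<Longrightarrow> e \<in> L \<Longrightarrow> \<not> prl e b \<Longrightarrow> par (proj b e X) e = par X e"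
  using proj par_mem by blast

lemma proj_inj: assumes "a \<in> L" "b \<in> L" "e \<in> L" "\<not> prl e a" "\<not> prl e b" "X \<in> a" "X' \<in> a"
  "proj b e X = proj b e X'" shows "X = X'"
proof -
  have "par X e = par X' e" using proj_par[OF assms(2,3,5)] assms(8) by metis
  then have "X' \<in> par X e" using par[OF assms(3)] by metis
  moreover have "par X e \<noteq> a" using par[OF assms(3)] assms(4) prl_sym by metis
  ultimately show ?thesis using two_pts[OF assms(1)] par[OF assms(3)] assms(6,7) by metis
qed

lemma proj_prl: "prl e e' \<Longrightarrow> proj b e X = proj b e' X"
  unfolding proj_def using par_prl by metis

lemma DES: assumes "a \<in> L" "b \<in> L" "c \<in> L" "a \<noteq> b" "a \<noteq> c" "b \<noteq> c"
  "(prl a b \<and> prl a c) \<or> (\<exists>P. P \<in> a \<and> P \<in> b \<and> P \<in> c)"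
  "A \<in> a" "A' \<in> a" "A \<noteq> A'" "B \<in> b" "B' \<in> b" "B \<noteq> B'" "C \<in> c" "C' \<in> c" "C \<noteq> C'"
  "A \<noteq> B" "C \<notin> ln A B" "A' \<noteq> B'" "C' \<notin> ln A' B'"
  "prl (ln A B) (ln A' B')" "prl (ln B C) (ln B' C')"
  shows "prl (ln A C) (ln A' C')"
proof -
  have la: "ln A A' = a" "ln B B' = b" "ln C C' = c" using ln_unique assms by auto
  have nc: "\<not> collinear3 L A B C" "\<not> collinear3 L A' B' C'" using collinear_iff assms by auto
  have D: "\<And>A B C A' B' C'. \<not> collinear3 L A B C \<and> \<not> collinear3 L A' B' C' \<and>
       A \<noteq> A' \<and> B \<noteq> B' \<and> C \<noteq> C' \<and>
       ln A A' \<noteq> ln B B' \<and> ln A A' \<noteq> ln C C' \<and> ln B B' \<noteq> ln C C' \<and>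
       ((prl (ln A A') (ln B B') \<and> prl (ln A A') (ln C C')) \<or>
        (\<exists>P. P \<in> ln A A' \<and> P \<in> ln B B' \<and> P \<in> ln C C')) \<and>
       prl (ln A B) (ln A' B') \<and> prl (ln B C) (ln B' C') \<Longrightarrow> prl (ln A C) (ln A' C')"
    using des unfolding desargues_def by blast
  show ?thesis by (rule D[of A B C A' B' C']) (use la nc assms in simp)
qed


lemma par_prl_self: "e \<in> L \<Longrightarrow> prl (par X e) e"
  using par by blast

lemma proj_ln: assumes "b \<in> L" "e \<in> L" "\<not> prl e b" "X \<notin> b"
  shows "ln X (proj b e X) = par X e" "prl (ln X (proj b e X)) e" "X \<noteq> proj b e X"
proof -
  show "X \<noteq> proj b e X" using proj[OF assms(1-3)] assms(4) by metis
  then show "ln X (proj b e X) = par X e" using ln_par[OF assms(2)] proj[OF assms(1-3)] by blast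
  then show "prl (ln X (proj b e X)) e" using par assms(2) by metis
qed

definition pencil where "pencil a b c \<longleftrightarrow> (prl a b \<and> prl a c) \<or> (\<exists>P. P \<in> a \<and> P \<in> b \<and> P \<in> c)"

lemma pencil_meet: assumes "a \<in> L" "b \<in> L" "c \<in> L" "a \<noteq> b" "a \<noteq> c" "b \<noteq> c" "pencil a b c"
  "x \<in> a" "x \<in> c" shows "x \<in> b"
proof (cases "prl a b \<and> prl a c")
  case True
  then show ?thesis using prl_meet assms by blast
next
  case False
  then obtain P where "P \<in> a" "P \<in> b" "P \<in> c" using assms(7) unfolding pencil_def by blast
  then show ?thesis using two_pts[OF assms(1) assms(3)] assms by metis
qed

lemma pencil_perm: "pencil a b c \<Longrightarrow> pencil b a c \<and> pencil a c b \<and> pencil c b a \<and> pencil b c a \<and> pencil c a b"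
  unfolding pencil_def using prl_sym prl_trans by blast

lemma PC: assumes "a \<in> L" "b \<in> L" "c \<in> L" "a \<noteq> b" "a \<noteq> c" "b \<noteq> c" "pencil a b c"
  "e1 \<in> L" "e2 \<in> L" "\<not> prl e1 a" "\<not> prl e1 b" "\<not> prl e2 b" "\<not> prl e2 c"
  "A0 \<in> a" "A0 \<notin> b" "A \<in> a"
  shows "proj c e2 (proj b e1 A) = proj c (ln A0 (proj c e2 (proj b e1 A0))) A"
proof -
  note pm = pencil_meet[OF assms(1-7)]
    pencil_meet[OF assms(2,1,3) assms(4)[symmetric] assms(6,5) conjunct1[OF pencil_perm[OF assms(7)]]]
    pencil_meet[OF assms(1,3,2) assms(5,4) assms(6)[symmetric] conjunct1[OF conjunct2[OF pencil_perm[OF assms(7)]]]]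
  define B0 where "B0 = proj b e1 A0"
  define C0 where "C0 = proj c e2 B0"
  define e3 where "e3 = ln A0 C0"
  have B0: "B0 \<in> b" "B0 \<in> par A0 e1" using proj[OF assms(2,8,11)] B0_def by auto
  have C0: "C0 \<in> c" "C0 \<in> par B0 e2" using proj[OF assms(3,9,13)] C0_def by auto
  have A0c: "A0 \<notin> c" using pm assms(14,15) by blast
  have B0c: "B0 \<notin> c"
  proof
    assume "B0 \<in> c"
    then have "B0 \<in> a" using pm B0 by blast
    then have "proj b e1 B0 = proj b e1 A0" using proj_on[OF assms(2,8,11)] B0 B0_def by simp
    then have "B0 = A0" using proj_inj[OF assms(1,2,8,10,11)] \<open>B0 \<in> a\<close> assms(14) by blast
    then show False using B0 assms(15) by simp
  qed
  have B0a: "B0 \<notin> a" using B0c B0 pm by blast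
  have C0b: "C0 \<notin> b"
  proof
    assume "C0 \<in> b"
    then have "proj c e2 C0 = proj c e2 B0" using proj_on[OF assms(3,9,13)] C0 C0_def by simp
    then have "C0 = B0" using proj_inj[OF assms(2,3,9,12,13)] \<open>C0 \<in> b\<close> B0 by blast
    then show False using B0c C0 by simp
  qed
  have A0C0: "A0 \<noteq> C0" using A0c C0 by blast
  have e3: "e3 \<in> L" "A0 \<in> e3" "C0 \<in> e3" using ln[OF A0C0] e3_def by auto
  have e3c: "\<not> prl e3 c" using not_prl[OF e3(1) assms(3) e3(3) C0(1)] e3(2) A0c by blast
  have goal: "proj c e2 (proj b e1 A) = proj c e3 A"
  proof (cases "A = A0")
    case True
    have "C0 \<in> par A0 e3" using par_self[OF e3(1,2)] e3 by simp
    then show ?thesis using proj_eq[OF assms(3) e3(1) e3c C0(1)] True B0_def C0_def by simp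
  next
    case AA0: False
    show ?thesis
    proof (cases "A \<in> b")
      case True
      then have "A \<in> c" using pm assms(16) by blast
      then show ?thesis using proj_on[OF assms(2,8,11) True] proj_on[OF assms(3,9,13)] proj_on[OF assms(3) e3(1) e3c] by simp
    next
      case Ab: False
      define B where "B = proj b e1 A"
      define C where "C = proj c e2 B"
      have B: "B \<in> b" "B \<in> par A e1" using proj[OF assms(2,8,11)] B_def by auto
      have Cc: "C \<in> c" "C \<in> par B e2" using proj[OF assms(3,9,13)] C_def by auto
      have Ac: "A \<notin> c" using pm assms(16) Ab by blast
      have Bc: "B \<notin> c"
      proof
        assume "B \<in> c"
        then have "B \<in> a" using pm B by blast
        then have "proj b e1 B = proj b e1 A" using proj_on[OF assms(2,8,11)] B B_def by simp
        then have "B = A" using proj_inj[OF assms(1,2,8,10,11)] \<open>B \<in> a\<close> assms(16) by blast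
        then show False using B Ab by simp
      qed
      have AC: "A \<noteq> C" using Ac Cc by blast
      have "C \<in> par A e3"
      proof (cases "prl e1 e2")
        case True
        have "par B0 e2 = par A0 e1" using par_prl[OF True] par_mem[OF assms(8) B0(2)] by simp
        then have "e3 = par A0 e1" using ln_par[OF assms(8) A0C0] C0 e3_def by simp
        then have "prl e3 e1" using par[OF assms(8)] by simp
        then have pe: "par A e3 = par A e1" using par_prl by blast
        have "par B e2 = par A e1" using par_prl[OF True] par_mem[OF assms(8) B(2)] by simp
        then show ?thesis using pe Cc by simp
      next
        case ne: False
        have BB0: "B0 \<noteq> B" using proj_inj[OF assms(1,2,8,10,11) assms(14,16)] AA0 B0_def B_def by blast
        have CC0: "C0 \<noteq> C" using proj_inj[OF assms(2,3,9,12,13) B0(1) B(1)] BB0 C0_def C_def by blast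
        have A0B0: "A0 \<noteq> B0" "A \<noteq> B" using assms(15) B0 Ab B by auto
        have l1: "ln A0 B0 = par A0 e1" "ln A B = par A e1" using ln_par[OF assms(8)] A0B0 B0 B by auto
        have BC: "B0 \<noteq> C0" "B \<noteq> C" using B0c C0 Bc Cc by auto
        then have l2: "ln B0 C0 = par B0 e2" "ln B C = par B e2" using ln_par[OF assms(9)] C0(2) Cc(2) by blast+
        have pa: "par A0 e1 = par B0 e1" "par A e1 = par B e1" using par_mem[OF assms(8)] B0 B by auto
        have nc1: "C0 \<notin> ln A0 B0"
        proof
          assume "C0 \<in> ln A0 B0"
          then have "C0 \<in> par B0 e1" using l1 pa by simp
          then have "ln B0 C0 = par B0 e1" using ln_par[OF assms(8) BC(1)] by blast
          then have "par B0 e1 = par B0 e2" using l2 by simp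
          then show False using ne par[OF assms(8)] par[OF assms(9)] prl_trans prl_sym by metis
        qed
        have nc2: "C \<notin> ln A B"
        proof
          assume "C \<in> ln A B"
          then have "C \<in> par B e1" using l1 pa by simp
          then have "ln B C = par B e1" using ln_par[OF assms(8) BC(2)] by blast
          then have "par B e1 = par B e2" using l2 by simp
          then show False using ne par[OF assms(8)] par[OF assms(9)] prl_trans prl_sym by metis
        qed
        have p1: "prl (ln A0 B0) (ln A B)" using l1 par[OF assms(8)] prl_trans prl_sym by metis
        have p2: "prl (ln B0 C0) (ln B C)" using l2 par[OF assms(9)] prl_trans prl_sym by metis
        have "prl (ln A0 C0) (ln A C)"
          using DES[OF assms(1-6) _ assms(14,16) AA0[symmetric] B0(1) B(1) BB0 C0(1) Cc(1) CC0 A0B0(1) nc1 A0B0(2) nc2 p1 p2]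
            assms(7) unfolding pencil_def by blast
        then have "prl (ln A C) e3" using e3_def prl_sym by simp
        then show ?thesis using par_mem_iff[OF e3(1) AC] by simp
      qed
      then show ?thesis using proj_eq[OF assms(3) e3(1) e3c Cc(1)] B_def C_def by simp
    qed
  qed
  then show ?thesis using e3_def C0_def B0_def by simp
qed

end

context dap begin

lemma nprl_trans: "prl a b \<Longrightarrow> \<not> prl e a \<Longrightarrow> \<not> prl e b"
  using prl_trans prl_sym by blast

lemma lnX: assumes "l \<in> L" "P \<in> l" "X \<notin> l"
  shows "ln P X \<in> L" "P \<in> ln P X" "X \<in> ln P X" "\<not> prl (ln P X) l" "ln P X \<noteq> l"
proof -
  have PX: "P \<noteq> X" using assms by auto
  show a: "ln P X \<in> L" "P \<in> ln P X" "X \<in> ln P X" using ln[OF PX] by auto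
  show "ln P X \<noteq> l" using a assms by auto
  then show "\<not> prl (ln P X) l" using not_prl a assms by blast
qed

lemma parX: assumes "l \<in> L" "X \<notin> l"
  shows "par X l \<in> L" "X \<in> par X l" "prl (par X l) l" "par X l \<inter> l = {}" "par X l \<noteq> l"
proof -
  show a: "par X l \<in> L" "X \<in> par X l" "prl (par X l) l" using par[OF assms(1)] by auto
  show "par X l \<noteq> l" using a assms by auto
  then show "par X l \<inter> l = {}" using a unfolding parallel_def by auto
qed

lemma lnX_m: assumes "l \<in> L" "P \<in> l" "X \<notin> l" shows "\<not> prl (ln P X) (par X l)"
  using nprl_trans[OF prl_sym[OF parX(3)[OF assms(1,3)]] lnX(4)[OF assms]] .

definition addX where "addX l Z X A B = proj l (ln B X) (proj (par X l) (ln Z X) A)"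
definition mulX where "mulX l Z U X A B = proj l (ln B X) (proj (ln Z X) (ln U X) A)"

lemma add_pt_addX: "add_pt L Z U A B = addX (ln Z U) Z (aux_point (ln Z U)) A B"
  unfolding add_pt_def addX_def Let_def proj_def using meet_comm by metis

lemma mul_pt_mulX: "mul_pt L Z U A B = mulX (ln Z U) Z U (aux_point (ln Z U)) A B"
  unfolding mul_pt_def mulX_def Let_def proj_def by simp

lemma GL: assumes "l \<in> L" "P \<notin> l" "X \<notin> l" "T \<in> l"
  shows "\<exists>!B. B \<in> l \<and> proj l (ln B X) P = T"
proof
  have PT: "P \<noteq> T" using assms by auto
  have t: "ln T P \<in> L" "T \<in> ln T P" "P \<in> ln T P" "\<not> prl (ln T P) l" using lnX[OF assms(1,4,2)] by auto
  define B where "B = proj l (ln T P) X"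
  have B: "B \<in> l" "B \<in> par X (ln T P)" using proj[OF assms(1) t(1,4)] B_def by auto
  have BX: "B \<noteq> X" using B assms by auto
  have "ln B X = par X (ln T P)" using ln_par[OF t(1) BX[symmetric] B(2)] ln_sym by metis
  then have p: "prl (ln B X) (ln T P)" using par[OF t(1)] by simp
  have "proj l (ln B X) P = proj l (ln T P) P" using proj_prl[OF p] by simp
  also have "\<dots> = T" using proj_eq[OF assms(1) t(1,4) assms(4)] par_self[OF t(1,3)] t(2) by simp
  finally show "B \<in> l \<and> proj l (ln B X) P = T" using B by simp
next
  fix B assume B: "B \<in> l \<and> proj l (ln B X) P = T"
  have t: "ln T P \<in> L" "T \<in> ln T P" "P \<in> ln T P" "\<not> prl (ln T P) l" using lnX[OF assms(1,4,2)] by auto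
  have PT: "P \<noteq> T" using assms by auto
  have "\<forall>B'. B' \<in> l \<and> proj l (ln B' X) P = T \<longrightarrow> prl (ln B' X) (ln T P)"
  proof (intro allI impI)
    fix B' assume B': "B' \<in> l \<and> proj l (ln B' X) P = T"
    have b: "ln B' X \<in> L" "\<not> prl (ln B' X) l" using lnX[OF assms(1) _ assms(3)] B' by auto
    have "T \<in> par P (ln B' X)" using proj[OF assms(1) b(1,2)] B' by blast
    then have "prl (ln P T) (ln B' X)" using par_mem_iff[OF b(1) PT] by simp
    then show "prl (ln B' X) (ln T P)" using prl_sym ln_sym by metis
  qed
  note th = this
  define B0 where "B0 = proj l (ln T P) X"
  have B0: "B0 \<in> l" "B0 \<in> par X (ln T P)" using proj[OF assms(1) t(1,4)] B0_def by auto
  have BX: "B0 \<noteq> X" using B0 assms by auto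
  have "ln B0 X = par X (ln T P)" using ln_par[OF t(1) BX[symmetric] B0(2)] ln_sym by metis
  then have p: "prl (ln B0 X) (ln T P)" using par[OF t(1)] by simp
  have "prl (ln B X) (ln B0 X)" using th B p prl_trans prl_sym by blast
  then have "ln B X = ln B0 X" using prl_meet lnX(3)[OF assms(1) _ assms(3)] B B0 by blast
  then have "B \<in> ln B0 X" using lnX(2)[OF assms(1) _ assms(3)] B by metis
  then show "B = B0" using two_pts[OF assms(1) lnX(1)[OF assms(1) B0(1) assms(3)]] B B0(1)
      lnX(2,5)[OF assms(1) B0(1) assms(3)] by blast
qed

context
  fixes l Z X
  assumes l: "l \<in> L" and Z: "Z \<in> l" and X: "X \<notin> l"
begin

lemma add_basics:
  shows "par X l \<in> L" "ln Z X \<in> L" "\<not> prl (ln Z X) (par X l)"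
    "\<And>A. proj (par X l) (ln Z X) A \<in> par X l"
    "\<And>A. proj (par X l) (ln Z X) A \<notin> l"
    "\<And>B. B \<in> l \<Longrightarrow> ln B X \<in> L \<and> \<not> prl (ln B X) l \<and> \<not> prl (ln B X) (par X l)"
proof -
  show a: "par X l \<in> L" "ln Z X \<in> L" "\<not> prl (ln Z X) (par X l)"
    using parX[OF l X] lnX[OF l Z X] lnX_m[OF l Z X] by auto
  show b: "\<And>A. proj (par X l) (ln Z X) A \<in> par X l" using proj[OF a(1,2,3)] by blast
  show "\<And>A. proj (par X l) (ln Z X) A \<notin> l" using b parX[OF l X] by blast
  show "\<And>B. B \<in> l \<Longrightarrow> ln B X \<in> L \<and> \<not> prl (ln B X) l \<and> \<not> prl (ln B X) (par X l)"
    using lnX[OF l _ X] lnX_m[OF l _ X] by blast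
qed

lemma add_in: "B \<in> l \<Longrightarrow> addX l Z X A B \<in> l"
  unfolding addX_def using proj[OF l] add_basics(6) by blast

lemma add_Z_left: assumes "B \<in> l" shows "addX l Z X Z B = B"
proof -
  have "proj (par X l) (ln Z X) Z = X"
    using proj_eq[OF add_basics(1,2,3)] parX[OF l X] par_self[OF lnX(1,2)[OF l Z X]] lnX(3)[OF l Z X] by simp
  moreover have "proj l (ln B X) X = B"
    using proj_eq[OF l] add_basics(6)[OF assms] assms par_self[OF lnX(1,3)[OF l assms X]] lnX(2)[OF l assms X] by simp
  ultimately show ?thesis unfolding addX_def by simp
qed

lemma add_Z_right: assumes "A \<in> l" shows "addX l Z X A Z = A"
proof -
  have "A \<in> par (proj (par X l) (ln Z X) A) (ln Z X)"
    using proj_par[OF add_basics(1,2,3)] par[OF add_basics(2)] by simp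
  then show ?thesis unfolding addX_def using proj_eq[OF l] add_basics(6)[OF Z] assms by blast
qed

lemma add_inj_left: assumes "A \<in> l" "A' \<in> l" "B \<in> l" "addX l Z X A B = addX l Z X A' B"
  shows "A = A'"
proof -
  have "proj (par X l) (ln Z X) A = proj (par X l) (ln Z X) A'"
    using proj_inj[OF add_basics(1) l _ _ ] add_basics(6)[OF assms(3)] add_basics(4) assms(4)
    unfolding addX_def by blast
  then show ?thesis
    using proj_inj[OF l add_basics(1,2) lnX(4)[OF l Z X] add_basics(3) assms(1,2)] by blast
qed

lemma add_solve: assumes "A \<in> l" "T \<in> l" shows "\<exists>!B. B \<in> l \<and> addX l Z X A B = T"
  unfolding addX_def using GL[OF l add_basics(5) X assms(2)] by blast

end

context
  fixes l Z U X
  assumes l: "l \<in> L" and Z: "Z \<in> l" and U: "U \<in> l" and ZU: "Z \<noteq> U" and X: "X \<notin> l"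
begin

lemma mul_basics:
  shows "ln Z X \<in> L" "ln U X \<in> L" "\<not> prl (ln U X) (ln Z X)" "\<not> prl (ln U X) l"
    "\<And>A. proj (ln Z X) (ln U X) A \<in> ln Z X"
    "\<And>B. B \<in> l \<Longrightarrow> ln B X \<in> L \<and> \<not> prl (ln B X) l"
    "Z \<in> ln Z X" "X \<in> ln Z X" "U \<notin> ln Z X"
proof -
  show a: "ln Z X \<in> L" "ln U X \<in> L" "\<not> prl (ln U X) l" using lnX[OF l Z X] lnX[OF l U X] by auto
  show c: "Z \<in> ln Z X" "X \<in> ln Z X" using lnX[OF l Z X] by auto
  show d: "U \<notin> ln Z X" using two_pts[OF l a(1) Z c(1)] U ZU lnX(5)[OF l Z X] by blast
  show b: "\<not> prl (ln U X) (ln Z X)"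
    using not_prl[OF a(2) a(1) lnX(3)[OF l U X] c(2)] d lnX(2)[OF l U X] by blast
  show "\<And>A. proj (ln Z X) (ln U X) A \<in> ln Z X" using proj[OF a(1,2) b] by blast
  show "\<And>B. B \<in> l \<Longrightarrow> ln B X \<in> L \<and> \<not> prl (ln B X) l" using lnX[OF l _ X] by blast
qed

lemma mul_in: "B \<in> l \<Longrightarrow> mulX l Z U X A B \<in> l"
  unfolding mulX_def using proj[OF l] mul_basics(6) by blast

lemma mul_U_left: assumes "B \<in> l" shows "mulX l Z U X U B = B"
proof -
  have "proj (ln Z X) (ln U X) U = X"
    using proj_eq[OF mul_basics(1,2,3) mul_basics(8)] par_self[OF lnX(1,2)[OF l U X]] lnX(3)[OF l U X] by simp
  moreover have "proj l (ln B X) X = B"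
    using proj_eq[OF l] mul_basics(6)[OF assms] assms par_self[OF lnX(1,3)[OF l assms X]] lnX(2)[OF l assms X] by simp
  ultimately show ?thesis unfolding mulX_def by simp
qed

lemma mul_U_right: assumes "A \<in> l" shows "mulX l Z U X A U = A"
proof -
  have "A \<in> par (proj (ln Z X) (ln U X) A) (ln U X)"
    using proj_par[OF mul_basics(1,2,3)] par[OF mul_basics(2)] by simp
  then show ?thesis unfolding mulX_def using proj_eq[OF l] mul_basics(6)[OF U] assms by blast
qed

lemma mul_Z_left: assumes "B \<in> l" shows "mulX l Z U X Z B = Z"
proof -
  have "proj (ln Z X) (ln U X) Z = Z" using proj_on[OF mul_basics(1,2,3,7)] .
  then show ?thesis unfolding mulX_def using proj_on[OF l _ _ Z] mul_basics(6)[OF assms] by simp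
qed

lemma mul_Z_right: assumes "A \<in> l" shows "mulX l Z U X A Z = Z"
proof -
  have "Z \<in> par (proj (ln Z X) (ln U X) A) (ln Z X)"
    using par_self[OF mul_basics(1) mul_basics(5)] mul_basics(7) by simp
  then show ?thesis unfolding mulX_def using proj_eq[OF l] mul_basics(6)[OF Z] Z by blast
qed

lemma mul_solve: assumes "A \<in> l" "A \<noteq> Z" "T \<in> l" shows "\<exists>!B. B \<in> l \<and> mulX l Z U X A B = T"
proof -
  have "proj (ln Z X) (ln U X) A \<notin> l"
  proof
    assume a: "proj (ln Z X) (ln U X) A \<in> l"
    have "proj (ln Z X) (ln U X) A = Z"
      using two_pts[OF l mul_basics(1) a mul_basics(5) Z mul_basics(7)] lnX(5)[OF l Z X] by blast
    then have "proj (ln Z X) (ln U X) A = proj (ln Z X) (ln U X) Z" using proj_on[OF mul_basics(1,2,3,7)] by simp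
    then show False using proj_inj[OF l mul_basics(1,2,4,3) assms(1) Z] assms(2) by blast
  qed
  then show ?thesis unfolding mulX_def using GL[OF l _ X assms(3)] by blast
qed

end

end

context dap begin

definition rich where
  "rich \<longleftrightarrow> (\<forall>k\<in>L. \<exists>P Q R. P \<in> k \<and> Q \<in> k \<and> R \<in> k \<and> P \<noteq> Q \<and> P \<noteq> R \<and> Q \<noteq> R)"

lemma proj_to_pt: "b \<in> L \<Longrightarrow> e \<in> L \<Longrightarrow> \<not> prl e b \<Longrightarrow> Y \<in> b \<Longrightarrow> Y \<in> e \<Longrightarrow> X \<in> e \<Longrightarrow> proj b e X = Y"
  using proj_eq par_self by metis

lemma other_than: assumes "l \<in> L" "m \<in> L" "l \<noteq> m" shows "\<exists>P. P \<in> l \<and> P \<notin> m"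
  using line_two[OF assms(1)] two_pts[OF assms(1,2)] assms(3) by metis

lemma off_two: assumes "rich" "l \<in> L" "m \<in> L" shows "\<exists>X. X \<notin> l \<and> X \<notin> m"
proof (cases "l = m")
  case True
  then show ?thesis using off_line[OF assms(2)] by blast
next
  case False
  obtain P where P: "P \<in> l" "P \<notin> m" using other_than[OF assms(2,3) False] by blast
  obtain Q where Q: "Q \<in> m" "Q \<notin> l" using other_than[OF assms(3,2)] False by metis
  have PQ: "P \<noteq> Q" using P Q by auto
  have t: "ln P Q \<in> L" "P \<in> ln P Q" "Q \<in> ln P Q" using ln[OF PQ] by auto
  obtain R where R: "R \<in> ln P Q" "R \<noteq> P" "R \<noteq> Q" using assms(1) t(1) unfolding rich_def by metis
  have "R \<notin> l" using two_pts[OF assms(2) t(1) P(1) t(2) _ R(1)] R(2) Q t(3) by blast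
  moreover have "R \<notin> m" using two_pts[OF assms(3) t(1) Q(1) t(3) _ R(1)] R(3) P t(2) by blast
  ultimately show ?thesis by blast
qed

lemma par_mem_ne: "l \<in> L \<Longrightarrow> par B1 l \<noteq> par B2 l \<Longrightarrow> B2 \<notin> par B1 l"
  using par_mem by metis

lemma addind0: assumes l: "l \<in> L" and Z: "Z \<in> l" and A: "A \<in> l" and B: "B \<in> l"
  and B1: "B1 \<notin> l" and B2: "B2 \<notin> l" and ne: "par B1 l \<noteq> par B2 l"
  shows "addX l Z B1 A B = addX l Z B2 A B"
proof -
  define m1 where "m1 = par B1 l"
  define m2 where "m2 = par B2 l"
  have m1: "m1 \<in> L" "B1 \<in> m1" "prl m1 l" "m1 \<inter> l = {}" "m1 \<noteq> l" using parX[OF l B1] m1_def by auto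
  have m2: "m2 \<in> L" "B2 \<in> m2" "prl m2 l" "m2 \<inter> l = {}" "m2 \<noteq> l" using parX[OF l B2] m2_def by auto
  have B2m1: "B2 \<notin> m1" using par_mem_ne[OF l ne] m1_def by simp
  have B1m2: "B1 \<notin> m2" using par_mem_ne[OF l ne[symmetric]] m2_def by simp
  have B12: "B1 \<noteq> B2" using B2m1 m1 by auto
  have e: "ln B1 B2 \<in> L" "B1 \<in> ln B1 B2" "B2 \<in> ln B1 B2" using ln[OF B12] by auto
  have e1: "\<not> prl (ln B1 B2) m1" using not_prl[OF e(1) m1(1) e(2) m1(2)] e(3) B2m1 by blast
  have e2: "\<not> prl (ln B1 B2) m2" using not_prl[OF e(1) m2(1) e(3) m2(2)] e(2) B1m2 by blast
  have pen1: "pencil l m1 m2" unfolding pencil_def using m1(3) m2(3) prl_sym by blast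
  have pen2: "pencil m1 m2 l" unfolding pencil_def using m1(3) m2(3) prl_sym prl_trans by blast
  have Zm1: "Z \<notin> m1" using m1 Z by auto
  define P1 where "P1 = proj m1 (ln Z B1) A"
  have P1: "P1 \<in> m1" using proj[OF m1(1) lnX(1)[OF l Z B1]] lnX_m[OF l Z B1] P1_def m1_def by blast
  have s1: "proj m1 (ln Z B1) Z = B1"
    using proj_to_pt[OF m1(1) lnX(1)[OF l Z B1] _ m1(2) lnX(3,2)[OF l Z B1]] lnX_m[OF l Z B1] m1_def by blast
  have s2: "proj m2 (ln B1 B2) B1 = B2" using proj_to_pt[OF m2(1) e(1) e2 m2(2) e(3,2)] .
  have pc1: "proj m2 (ln B1 B2) P1 = proj m2 (ln Z B2) A"
    using PC[OF l m1(1) m2(1) m1(5)[symmetric] m2(5)[symmetric] ne[folded m1_def m2_def] pen1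
        lnX(1)[OF l Z B1] e(1) lnX(4)[OF l Z B1] _ e1 e2 Z Zm1 A] lnX_m[OF l Z B1] s1 s2 P1_def m1_def
    by metis
  have s3: "proj l (ln B B2) B2 = B"
    using proj_to_pt[OF l lnX(1)[OF l B B2] lnX(4)[OF l B B2] B lnX(2,3)[OF l B B2]] .
  have pc2: "proj l (ln B B2) (proj m2 (ln B1 B2) P1) = proj l (ln B1 B) P1"
    using PC[OF m1(1) m2(1) l ne[folded m1_def m2_def] m1(5) m2(5) pen2 e(1) lnX(1)[OF l B B2] e1 e2 _
        lnX(4)[OF l B B2] m1(2) B1m2 P1] lnX_m[OF l B B2] s2 s3 m2_def by metis
  show ?thesis unfolding addX_def using pc1 pc2 P1_def m1_def m2_def ln_sym by metis
qed

lemma addind: assumes "rich" and l: "l \<in> L" and Z: "Z \<in> l" and A: "A \<in> l" and B: "B \<in> l"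
  and B1: "B1 \<notin> l" and B2: "B2 \<notin> l"
  shows "addX l Z B1 A B = addX l Z B2 A B"
proof (cases "par B1 l = par B2 l")
  case False
  then show ?thesis using addind0[OF l Z A B B1 B2] by blast
next
  case True
  obtain B3 where B3: "B3 \<notin> l" "B3 \<notin> par B1 l" using off_two[OF assms(1) l parX(1)[OF l B1]] by blast
  have "par B3 l \<noteq> par B1 l" using B3 parX(2)[OF l B3(1)] by metis
  then show ?thesis using addind0[OF l Z A B B1 B3(1)] addind0[OF l Z A B B3(1) B2] True by metis
qed

lemma mulind0: assumes l: "l \<in> L" and Z: "Z \<in> l" and U: "U \<in> l" and ZU: "Z \<noteq> U"
  and A: "A \<in> l" and B: "B \<in> l" and BZ: "B \<noteq> Z"
  and B1: "B1 \<notin> l" and B2: "B2 \<notin> l" and ne: "ln Z B1 \<noteq> ln Z B2"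
  shows "mulX l Z U B1 A B = mulX l Z U B2 A B"
proof -
  define n1 where "n1 = ln Z B1"
  define n2 where "n2 = ln Z B2"
  have n1: "n1 \<in> L" "Z \<in> n1" "B1 \<in> n1" "n1 \<noteq> l" using lnX[OF l Z B1] n1_def by auto
  have n2: "n2 \<in> L" "Z \<in> n2" "B2 \<in> n2" "n2 \<noteq> l" using lnX[OF l Z B2] n2_def by auto
  have B2n1: "B2 \<notin> n1" using ln_unique[of Z B2 n1] n1 ne n1_def B2 Z by auto
  have B1n2: "B1 \<notin> n2" using ln_unique[of Z B1 n2] n2 ne n2_def B1 Z by auto
  have B12: "B1 \<noteq> B2" using B2n1 n1 by auto
  have e: "ln B1 B2 \<in> L" "B1 \<in> ln B1 B2" "B2 \<in> ln B1 B2" using ln[OF B12] by auto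
  have e1: "\<not> prl (ln B1 B2) n1" using not_prl[OF e(1) n1(1) e(2) n1(3)] e(3) B2n1 by blast
  have e2: "\<not> prl (ln B1 B2) n2" using not_prl[OF e(1) n2(1) e(3) n2(3)] e(2) B1n2 by blast
  have pen1: "pencil l n1 n2" unfolding pencil_def using n1 n2 Z by blast
  have pen2: "pencil n1 n2 l" unfolding pencil_def using n1 n2 Z by blast
  have Un1: "U \<notin> n1" using mul_basics(9)[OF l Z U ZU B1] n1_def by simp
  have Bn2: "B \<notin> n2" using two_pts[OF l n2(1) Z n2(2) B] BZ n2(4) by blast
  have nU: "\<not> prl (ln U B1) n1" using mul_basics(3)[OF l Z U ZU B1] n1_def by simp
  define P1 where "P1 = proj n1 (ln U B1) A"
  have P1: "P1 \<in> n1" using proj[OF n1(1) lnX(1)[OF l U B1] nU] P1_def by blast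
  have s1: "proj n1 (ln U B1) U = B1"
    using proj_to_pt[OF n1(1) lnX(1)[OF l U B1] nU n1(3) lnX(3,2)[OF l U B1]] .
  have s2: "proj n2 (ln B1 B2) B1 = B2" using proj_to_pt[OF n2(1) e(1) e2 n2(3) e(3,2)] .
  have pc1: "proj n2 (ln B1 B2) P1 = proj n2 (ln U B2) A"
    using PC[OF l n1(1) n2(1) n1(4)[symmetric] n2(4)[symmetric] ne[folded n1_def n2_def] pen1
        lnX(1)[OF l U B1] e(1) lnX(4)[OF l U B1] nU e1 e2 U Un1 A] s1 s2 P1_def by metis
  have nB: "\<not> prl (ln B B2) n2" using not_prl[OF lnX(1)[OF l B B2] n2(1) lnX(3)[OF l B B2] n2(3)] lnX(2)[OF l B B2] Bn2 by blast
  have s3: "proj l (ln B B2) B2 = B"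
    using proj_to_pt[OF l lnX(1)[OF l B B2] lnX(4)[OF l B B2] B lnX(2,3)[OF l B B2]] .
  have pc2: "proj l (ln B B2) (proj n2 (ln B1 B2) P1) = proj l (ln B1 B) P1"
    using PC[OF n1(1) n2(1) l ne[folded n1_def n2_def] n1(4) n2(4) pen2 e(1) lnX(1)[OF l B B2] e1 e2 nB
        lnX(4)[OF l B B2] n1(3) B1n2 P1] s2 s3 by metis
  show ?thesis unfolding mulX_def using pc1 pc2 P1_def n1_def n2_def ln_sym by metis
qed

lemma mulind: assumes l: "l \<in> L" and Z: "Z \<in> l" and U: "U \<in> l" and ZU: "Z \<noteq> U"
  and A: "A \<in> l" and B: "B \<in> l" and B1: "B1 \<notin> l" and B2: "B2 \<notin> l"
  shows "mulX l Z U B1 A B = mulX l Z U B2 A B"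
proof (cases "B = Z")
  case True
  then show ?thesis using mul_Z_right[OF l Z U ZU B1 A] mul_Z_right[OF l Z U ZU B2 A] by simp
next
  case BZ: False
  show ?thesis
  proof (cases "ln Z B1 = ln Z B2")
    case False
    then show ?thesis using mulind0[OF l Z U ZU A B BZ B1 B2] by blast
  next
    case True
    define n1 where "n1 = ln Z B1"
    have n1: "n1 \<in> L" "Z \<in> n1" "B1 \<in> n1" "n1 \<noteq> l" using lnX[OF l Z B1] n1_def by auto
    have Un1: "U \<notin> n1" using mul_basics(9)[OF l Z U ZU B1] n1_def by simp
    have pU: "par U n1 \<in> L" "U \<in> par U n1" "par U n1 \<inter> n1 = {}" using parX[OF n1(1) Un1] by auto
    have pB: "par B1 l \<in> L" "par B1 l \<inter> l = {}" using parX[OF l B1] by auto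
    have np: "\<not> prl (par U n1) (par B1 l)"
    proof
      assume "prl (par U n1) (par B1 l)"
      then have "prl n1 l" using parX(3)[OF n1(1) Un1] parX(3)[OF l B1] prl_trans prl_sym by metis
      then show False using prl_meet n1 Z by blast
    qed
    define B3 where "B3 = meet (par U n1) (par B1 l)"
    have B3: "B3 \<in> par U n1" "B3 \<in> par B1 l" using meet[OF pU(1) pB(1) np] B3_def by auto
    have B3l: "B3 \<notin> l" using B3 pB by blast
    have B3n: "B3 \<notin> n1" using B3 pU by blast
    have "ln Z B3 \<noteq> n1" using lnX(3)[OF l Z B3l] B3n by metis
    then show ?thesis using mulind0[OF l Z U ZU A B BZ B1 B3l] mulind0[OF l Z U ZU A B BZ B3l B2] True n1_def
      by metis
  qed
qed

end

context dap begin

lemma par_inj: assumes "l \<in> L" "d \<in> L" "\<not> prl d l" "Y1 \<in> l" "Y2 \<in> l" "par Y1 d = par Y2 d"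
  shows "Y1 = Y2"
proof -
  have "Y2 \<in> par Y1 d" using par[OF assms(2)] assms(6) by metis
  moreover have "par Y1 d \<noteq> l" using par[OF assms(2)] assms(3) prl_sym by metis
  ultimately show ?thesis using two_pts[OF assms(1)] par[OF assms(2)] assms(4,5) by metis
qed

lemma proj_same: "par S e = par P e \<Longrightarrow> proj b e S = proj b e P"
  unfolding proj_def by simp

lemma kindP_add:
  assumes l1: "l1 \<in> L" and l2: "l2 \<in> L" and p12: "prl l1 l2" and ne: "l1 \<noteq> l2"
    and d: "d \<in> L" and d1: "\<not> prl d l1"
    and Z: "Z \<in> l1" and A: "A \<in> l1" and B: "B \<in> l1" and X1: "X \<notin> l1" and X2: "X \<notin> l2"
  shows "proj l2 d (addX l1 Z X A B) = addX l2 (proj l2 d Z) X (proj l2 d A) (proj l2 d B)"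
proof -
  have d2: "\<not> prl d l2" using nprl_trans[OF p12 d1] .
  define m where "m = par X l1"
  have mm: "par X l2 = m" using par_prl[OF p12] m_def by simp
  have m: "m \<in> L" "X \<in> m" "prl m l1" "m \<noteq> l1" using parX[OF l1 X1] m_def by auto
  have m2: "m \<noteq> l2" "prl m l2" using parX[OF l2 X2] mm by auto
  have fZ: "proj l2 d Z \<in> l2" using proj[OF l2 d d2] by blast
  have fB: "proj l2 d B \<in> l2" using proj[OF l2 d d2] by blast
  have Zl2: "Z \<notin> l2" using prl_ne[OF p12 ne Z] .
  have pen1: "pencil l1 l2 m" unfolding pencil_def using p12 m(3) prl_sym by blast
  have pen2: "pencil m l1 l2" unfolding pencil_def using p12 m(3) m2(2) prl_sym by blast
  have e2: "ln (proj l2 d Z) X \<in> L" "\<not> prl (ln (proj l2 d Z) X) l2" "\<not> prl (ln (proj l2 d Z) X) m"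
    using lnX[OF l2 fZ X2] lnX_m[OF l2 fZ X2] mm by auto
  have s1: "proj m (ln (proj l2 d Z) X) (proj l2 d Z) = X"
    using proj_to_pt[OF m(1) e2(1) e2(3) m(2) lnX(3,2)[OF l2 fZ X2]] .
  have pc1: "proj m (ln (proj l2 d Z) X) (proj l2 d A) = proj m (ln Z X) A"
    using PC[OF l1 l2 m(1) ne m(4)[symmetric] m2(1)[symmetric] pen1 d e2(1) d1 d2 e2(2,3) Z Zl2 A] s1 by simp
  define P1 where "P1 = proj m (ln Z X) A"
  have P1: "P1 \<in> m" using proj[OF m(1) lnX(1)[OF l1 Z X1]] lnX_m[OF l1 Z X1] P1_def m_def by blast
  have e1: "ln B X \<in> L" "\<not> prl (ln B X) m" "\<not> prl (ln B X) l1"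
    using lnX[OF l1 B X1] lnX_m[OF l1 B X1] m_def by auto
  have s2: "proj l1 (ln B X) X = B" using proj_to_pt[OF l1 e1(1) e1(3) B lnX(2,3)[OF l1 B X1]] .
  have pc2: "proj l2 d (proj l1 (ln B X) P1) = proj l2 (ln X (proj l2 d B)) P1"
    using PC[OF m(1) l1 l2 m(4) m2(1) ne pen2 e1(1) d e1(2,3) d1 d2 m(2) X1 P1] s2 by simp
  show ?thesis unfolding addX_def using pc1 pc2 P1_def m_def mm ln_sym by metis
qed

lemma kindC_mul:
  assumes l1: "l1 \<in> L" and l3: "l3 \<in> L" and ne: "l1 \<noteq> l3"
    and d: "d \<in> L" and d1: "\<not> prl d l1" and d3: "\<not> prl d l3"
    and Z1: "Z \<in> l1" and Z3: "Z \<in> l3" and U: "U \<in> l1" and ZU: "Z \<noteq> U"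
    and A: "A \<in> l1" and B: "B \<in> l1" and X1: "X \<notin> l1" and X3: "X \<notin> l3"
  shows "proj l3 d (mulX l1 Z U X A B) = mulX l3 Z (proj l3 d U) X (proj l3 d A) (proj l3 d B)"
proof -
  have gZ: "proj l3 d Z = Z" using proj_on[OF l3 d d3 Z3] .
  have gU: "proj l3 d U \<in> l3" using proj[OF l3 d d3] by blast
  have gA: "proj l3 d A \<in> l3" using proj[OF l3 d d3] by blast
  have ZgU: "Z \<noteq> proj l3 d U" using proj_inj[OF l1 l3 d d1 d3 Z1 U] gZ ZU by metis
  show ?thesis
  proof (cases "B = Z")
    case True
    then show ?thesis using mul_Z_right[OF l1 Z1 U ZU X1 A] mul_Z_right[OF l3 Z3 gU ZgU X3 gA] gZ by simp
  next
    case BZ: False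
    define n where "n = ln Z X"
    have n: "n \<in> L" "Z \<in> n" "X \<in> n" "n \<noteq> l1" using lnX[OF l1 Z1 X1] n_def by auto
    have n3: "n \<noteq> l3" using lnX[OF l3 Z3 X3] n_def by auto
    have pen1: "pencil l1 l3 n" unfolding pencil_def using n Z1 Z3 by blast
    have pen2: "pencil n l1 l3" unfolding pencil_def using n Z1 Z3 by blast
    have Ul3: "U \<notin> l3" using two_pts[OF l1 l3 Z1 Z3 U] ZU ne by blast
    have e2: "ln (proj l3 d U) X \<in> L" "\<not> prl (ln (proj l3 d U) X) l3" "\<not> prl (ln (proj l3 d U) X) n"
      using lnX[OF l3 gU X3] mul_basics(3)[OF l3 Z3 gU ZgU X3] n_def by auto
    have s1: "proj n (ln (proj l3 d U) X) (proj l3 d U) = X"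
      using proj_to_pt[OF n(1) e2(1) e2(3) n(3) lnX(3,2)[OF l3 gU X3]] .
    have pc1: "proj n (ln (proj l3 d U) X) (proj l3 d A) = proj n (ln U X) A"
      using PC[OF l1 l3 n(1) ne n(4)[symmetric] n3[symmetric] pen1 d e2(1) d1 d3 e2(2,3) U Ul3 A] s1 by simp
    define P1 where "P1 = proj n (ln U X) A"
    have P1: "P1 \<in> n" using mul_basics(5)[OF l1 Z1 U ZU X1] P1_def n_def by blast
    have Bn: "B \<notin> n" using two_pts[OF l1 n(1) Z1 n(2) B] BZ n(4) by blast
    have e1: "ln B X \<in> L" "\<not> prl (ln B X) n" "\<not> prl (ln B X) l1"
      using lnX[OF l1 B X1] not_prl[OF lnX(1)[OF l1 B X1] n(1) lnX(3)[OF l1 B X1] n(3)] lnX(2)[OF l1 B X1] Bn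
      by auto
    have s2: "proj l1 (ln B X) X = B" using proj_to_pt[OF l1 e1(1) e1(3) B lnX(2,3)[OF l1 B X1]] .
    have pc2: "proj l3 d (proj l1 (ln B X) P1) = proj l3 (ln X (proj l3 d B)) P1"
      using PC[OF n(1) l1 l3 n(4) n3 ne pen2 e1(1) d e1(2,3) d1 d3 n(3) X1 P1] s2 by simp
    show ?thesis unfolding mulX_def using pc1 pc2 P1_def n_def ln_sym by metis
  qed
qed

end

context dap begin

lemma prl_par_iff: "e \<in> L \<Longrightarrow> prl m e \<Longrightarrow> Y \<in> m \<Longrightarrow> m = par Y e"
  using par_unique prl_L by metis

lemma kindC_add:
  assumes l1: "l1 \<in> L" and l3: "l3 \<in> L" and ne: "l1 \<noteq> l3"
    and d: "d \<in> L" and d1: "\<not> prl d l1" and d3: "\<not> prl d l3"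
    and Z1: "Z \<in> l1" and Z3: "Z \<in> l3"
    and A: "A \<in> l1" and B: "B \<in> l1" and BZ: "B \<noteq> Z"
    and Xk: "X \<in> par B d" and XB: "X \<noteq> B" and XgB: "X \<noteq> proj l3 d B"
  shows "proj l3 d (addX l1 Z X A B) = addX l3 Z X (proj l3 d A) (proj l3 d B)"
proof -
  define k where "k = par B d"
  have k: "k \<in> L" "B \<in> k" "prl k d" using par[OF d] k_def by auto
  have kl1: "\<not> prl k l1" using k(3) d1 prl_trans prl_sym by blast
  have kl3: "\<not> prl k l3" using k(3) d3 prl_trans prl_sym by blast
  have gB: "proj l3 d B \<in> l3" "proj l3 d B \<in> k" using proj[OF l3 d d3] k_def by auto
  have kX: "X \<in> k" using Xk k_def by simp
  have X1: "X \<notin> l1" using two_pts[OF l1 k(1) _ kX B k(2)] XB kl1 prl_refl[OF l1] by metis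
  have X3: "X \<notin> l3" using two_pts[OF l3 k(1) _ kX gB] XgB kl3 prl_refl[OF l3] by metis
  have lBX: "ln B X = k" using ln_unique[OF XB[symmetric] k(1) k(2) kX] by simp
  have lgBX: "ln (proj l3 d B) X = k" using ln_unique[OF XgB[symmetric] k(1) gB(2) kX] by simp
  define m where "m = par X l1"
  define m' where "m' = par X l3"
  define n where "n = ln Z X"
  have m: "m \<in> L" "X \<in> m" "prl m l1" "m \<inter> l1 = {}" using parX[OF l1 X1] m_def by auto
  have m': "m' \<in> L" "X \<in> m'" "prl m' l3" "m' \<inter> l3 = {}" using parX[OF l3 X3] m'_def by auto
  have n: "n \<in> L" "Z \<in> n" "X \<in> n" "n \<noteq> l1" "n \<noteq> l3" using lnX[OF l1 Z1 X1] lnX[OF l3 Z3 X3] n_def by auto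
  have nm: "\<not> prl n m" using lnX_m[OF l1 Z1 X1] n_def m_def by simp
  have nm': "\<not> prl n m'" using lnX_m[OF l3 Z3 X3] n_def m'_def by simp
  define P1 where "P1 = proj m n A"
  define P1' where "P1' = proj m' n (proj l3 d A)"
  have P1: "P1 \<in> m" "P1 \<in> par A n" using proj[OF m(1) n(1) nm] P1_def by auto
  have P1': "P1' \<in> m'" "P1' \<in> par (proj l3 d A) n" using proj[OF m'(1) n(1) nm'] P1'_def by auto
  have key: "P1' \<in> par P1 d"
  proof (cases "A = Z")
    case True
    have "P1 = X" using proj_to_pt[OF m(1) n(1) nm m(2) n(3,2)] P1_def True by simp
    moreover have "P1' = X" using proj_to_pt[OF m'(1) n(1) nm' m'(2) n(3,2)] P1'_def True proj_on[OF l3 d d3 Z3] by simp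
    ultimately show ?thesis using par[OF d] by simp
  next
    case AZ: False
    define gA where "gA = proj l3 d A"
    have gA: "gA \<in> l3" "gA \<in> par A d" using proj[OF l3 d d3] gA_def by auto
    have gAZ: "gA \<noteq> Z" using proj_inj[OF l1 l3 d d1 d3 A Z1] proj_on[OF l3 d d3 Z3] AZ gA_def by metis
    have An: "A \<notin> n" using two_pts[OF l1 n(1) Z1 n(2) A] AZ n(4) by blast
    have gAn: "gA \<notin> n" using two_pts[OF l3 n(1) Z3 n(2) gA(1)] gAZ n(5) by blast
    have Al3: "A \<notin> l3" using two_pts[OF l1 l3 Z1 Z3 A] AZ ne by blast
    have AgA: "A \<noteq> gA" using Al3 gA by auto
    have gAl1: "gA \<notin> l1" using two_pts[OF l1 l3 Z1 Z3 _ gA(1)] gAZ ne by blast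
    have pa: "par A n \<in> L" "A \<in> par A n" "prl (par A n) n" using par[OF n(1)] by auto
    have pc: "par gA n \<in> L" "gA \<in> par gA n" "prl (par gA n) n" using par[OF n(1)] by auto
    have ab: "par A n \<noteq> n" using pa An by auto
    have bc: "n \<noteq> par gA n" using pc gAn by auto
    have nd: "\<not> prl n d"
    proof
      assume "prl n d"
      then have "n = par Z d" using prl_par_iff[OF d] n(2) by blast
      then have "par Z d = k" using par_mem[OF d] n(3) Xk k_def by metis
      then have "Z \<in> k" using par[OF d, of Z] by simp
      then show False using two_pts[OF l1 k(1) Z1 _ B k(2)] BZ kl1 prl_refl[OF l1] by metis
    qed
    have ac: "par A n \<noteq> par gA n"
    proof
      assume "par A n = par gA n"
      then have "gA \<in> par A n" using pc by simp
      then have "prl (ln A gA) n" using par_mem_iff[OF n(1) AgA] by simp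
      moreover have "prl (ln A gA) d" using par_mem_iff[OF d AgA] gA by simp
      ultimately show False using nd prl_trans prl_sym by blast
    qed
    have pen: "prl (par A n) n \<and> prl (par A n) (par gA n)" using pa pc prl_trans prl_sym by blast
    have AP1: "A \<noteq> P1" using P1 m A by auto
    have ZX: "Z \<noteq> X" using X1 Z1 by auto
    have gAP1': "gA \<noteq> P1'" using P1' m' gA by auto
    have P1X: "P1 \<noteq> X"
    proof
      assume "P1 = X"
      then have "par A n = n" using par_mem[OF n(1)] P1(2) par_self[OF n(1,3)] by metis
      then show False using ab by simp
    qed
    have mm': "m \<noteq> m'"
    proof
      assume "m = m'"
      then have "prl l1 l3" using m(3) m'(3) prl_trans prl_sym by metis
      then show False using prl_meet Z1 Z3 ne by blast
    qed
    have P1'X: "P1' \<noteq> X"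
    proof
      assume "P1' = X"
      then have "par gA n = n" using par_mem[OF n(1)] P1'(2) par_self[OF n(1,3)] gA_def by metis
      then show False using bc by simp
    qed
    have lP1X: "ln P1 X = m" using ln_unique[OF P1X m(1) P1(1) m(2)] .
    have P1'm: "P1' \<notin> ln P1 X" using lP1X two_pts[OF m(1) m'(1) m(2) m'(2) _ P1'(1)] P1'X mm' by blast
    have lAZ: "ln A Z = l1" using ln_unique[OF AZ l1 A Z1] .
    have gAl: "gA \<notin> ln A Z" using lAZ gAl1 by simp
    have lZgA: "ln Z gA = l3" using ln_unique[OF gAZ[symmetric] l3 Z3 gA(1)] .
    have lXP1': "ln X P1' = m'" using ln_unique[OF P1'X[symmetric] m'(1) m'(2) P1'(1)] .
    have p1: "prl (ln A Z) (ln P1 X)" using lAZ lP1X m(3) prl_sym by simp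
    have p2: "prl (ln Z gA) (ln X P1')" using lZgA lXP1' m'(3) prl_sym by simp
    have "prl (ln A gA) (ln P1 P1')"
      using DES[OF pa(1) n(1) pc(1) ab ac bc _ pa(2) P1(2) AP1 n(2) n(3) ZX pc(2) _ gAP1' AZ gAl P1X P1'm p1 p2]
        pen P1'(2) gA_def by blast
    moreover have "prl (ln A gA) d" using par_mem_iff[OF d AgA] gA by simp
    ultimately have "prl (ln P1 P1') d" using prl_trans prl_sym by blast
    moreover have "P1 \<noteq> P1'" using P1'X two_pts[OF m(1) m'(1) m(2) m'(2)] P1(1) P1'(1) mm' by blast
    ultimately show ?thesis using par_mem_iff[OF d] by blast
  qed
  define S where "S = proj l1 k P1"
  have S: "S \<in> par P1 k" using proj[OF l1 k(1) kl1] S_def by blast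
  have "par S d = par P1 d" using par_prl[OF k(3)] par_mem[OF k(1) S] by metis
  then have L: "proj l3 d S = proj l3 d P1" using proj_same by blast
  have "par P1' k = par P1 k" using par_mem[OF d key] par_prl[OF k(3)] by metis
  then have R: "proj l3 k P1' = proj l3 d P1" using proj_same proj_prl[OF k(3)] by metis
  show ?thesis unfolding addX_def using L R lBX lgBX S_def P1_def P1'_def m_def m'_def n_def by metis
qed

end

context dap begin

lemma kindP_mul:
  assumes l1: "l1 \<in> L" and l2: "l2 \<in> L" and p12: "prl l1 l2" and ne: "l1 \<noteq> l2"
    and d: "d \<in> L" and d1: "\<not> prl d l1"
    and Z: "Z \<in> l1" and U: "U \<in> l1" and ZU: "Z \<noteq> U"
    and A: "A \<in> l1" and B: "B \<in> l1" and BZ: "B \<noteq> Z" and BU: "B \<noteq> U" and AZ: "A \<noteq> Z" and AU: "A \<noteq> U"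
    and Xk: "X \<in> par B d" and XB: "X \<noteq> B" and XfB: "X \<noteq> proj l2 d B"
  shows "\<exists>X'. X' \<notin> l2 \<and> proj l2 d (mulX l1 Z U X A B) =
           mulX l2 (proj l2 d Z) (proj l2 d U) X' (proj l2 d A) (proj l2 d B)"
proof -
  have d2: "\<not> prl d l2" using nprl_trans[OF p12 d1] .
  define f where "f = proj l2 d"
  have fl2: "\<And>Y. f Y \<in> l2" "\<And>Y. f Y \<in> par Y d" using proj[OF l2 d d2] f_def by auto
  have finj: "\<And>Y1 Y2. Y1 \<in> l1 \<Longrightarrow> Y2 \<in> l1 \<Longrightarrow> f Y1 = f Y2 \<Longrightarrow> Y1 = Y2"
    using proj_inj[OF l1 l2 d d1 d2] f_def by blast
  have notl2: "\<And>Y. Y \<in> l1 \<Longrightarrow> Y \<notin> l2" using prl_ne[OF p12 ne] by blast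
  have Yf: "\<And>Y. Y \<in> l1 \<Longrightarrow> Y \<noteq> f Y" using notl2 fl2 by metis
  have pinj: "\<And>Y1 Y2. Y1 \<in> l1 \<Longrightarrow> Y2 \<in> l1 \<Longrightarrow> par Y1 d = par Y2 d \<Longrightarrow> Y1 = Y2"
    using par_inj[OF l1 d d1] by blast
  define k where "k = par B d"
  have k: "k \<in> L" "B \<in> k" "prl k d" using par[OF d] k_def by auto
  have kl1: "\<not> prl k l1" using k(3) d1 prl_trans prl_sym by blast
  have kl2: "\<not> prl k l2" using k(3) d2 prl_trans prl_sym by blast
  have kX: "X \<in> k" using Xk k_def by simp
  have fBk: "f B \<in> k" using fl2 k_def by simp
  have kne1: "k \<noteq> l1" using kl1 prl_refl[OF l1] by blast
  have kne2: "k \<noteq> l2" using kl2 prl_refl[OF l2] by blast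
  have kl1pt: "\<And>Y. Y \<in> l1 \<Longrightarrow> Y \<in> k \<Longrightarrow> Y = B"
  proof -
    fix Y assume "Y \<in> l1" "Y \<in> k"
    then show "Y = B" using two_pts[OF l1 k(1) \<open>Y \<in> l1\<close> \<open>Y \<in> k\<close> B k(2)] kne1 by blast
  qed
  have kl2pt: "\<And>Y. Y \<in> l2 \<Longrightarrow> Y \<in> k \<Longrightarrow> Y = f B"
  proof -
    fix Y assume "Y \<in> l2" "Y \<in> k"
    then show "Y = f B" using two_pts[OF l2 k(1) \<open>Y \<in> l2\<close> \<open>Y \<in> k\<close> fl2(1) fBk] kne2 by blast
  qed
  have X1: "X \<notin> l1" using kl1pt[of X] kX XB by blast
  have X2: "X \<notin> l2" using kl2pt[of X] kX XfB by (auto simp: f_def)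
  have pdk: "\<And>Y. Y \<in> l1 \<Longrightarrow> par Y d = k \<Longrightarrow> Y = B"
  proof -
    fix Y assume "Y \<in> l1" "par Y d = k"
    then show "Y = B" using pinj[of Y B] B k_def by simp
  qed
  define n where "n = ln Z X"
  have n: "n \<in> L" "Z \<in> n" "X \<in> n" "n \<noteq> l1" "\<not> prl n l1" using lnX[OF l1 Z X1] n_def by auto
  have nd: "\<not> prl n d"
  proof
    assume "prl n d"
    then have "n = par Z d" using prl_par_iff[OF d] n(2) by blast
    then have "par Z d = k" using par_mem[OF d] n(3) Xk k_def by metis
    then show False using pdk Z BZ by metis
  qed
  have nk: "\<not> prl n k" using nprl_trans[OF prl_sym[OF k(3)]] nd prl_sym by blast
  define X' where "X' = proj k n (f Z)"
  define n' where "n' = par (f Z) n"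
  have X': "X' \<in> k" "X' \<in> n'" using proj[OF k(1) n(1) nk] X'_def n'_def by auto
  have n': "n' \<in> L" "f Z \<in> n'" "prl n' n" using par[OF n(1)] n'_def by auto
  have pfZ: "par (f Z) d = par Z d" using par_mem[OF d] fl2(2) by blast
  have fZk: "f Z \<notin> k"
  proof
    assume "f Z \<in> k"
    then have "par (f Z) d = k" using par_mem[OF d] k_def by blast
    then show False using pfZ pdk Z BZ by metis
  qed
  have X'fZ: "X' \<noteq> f Z" using X' fZk by auto
  have lfZX': "ln (f Z) X' = n'" using ln_unique[OF X'fZ[symmetric] n'(1) n'(2) X'(2)] .
  have fZn: "f Z \<notin> n"
  proof
    assume a: "f Z \<in> n"
    have "ln Z (f Z) = par Z d" using ln_par[OF d Yf[OF Z] fl2(2)] .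
    moreover have "ln Z (f Z) = n" using ln_unique[OF Yf[OF Z] n(1) n(2) a] .
    ultimately show False using nd par[OF d] by metis
  qed
  have nn': "n \<inter> n' = {}" using n'(2) fZn n'(3) unfolding parallel_def by auto
  have n'l2: "n' \<noteq> l2"
  proof
    assume "n' = l2"
    then have "prl n l1" using n'(3) p12 prl_trans prl_sym by metis
    then show False using n(5) by simp
  qed
  have X'l2: "X' \<notin> l2"
  proof
    assume a: "X' \<in> l2"
    then have "X' = f B" using kl2pt X' by blast
    moreover have "f B \<noteq> f Z" using finj B Z BZ by blast
    ultimately have "n' = l2" using two_pts[OF n'(1) l2 n'(2) fl2(1) X'(2) a] by metis
    then show False using n'l2 by simp
  qed
  have XX': "X \<noteq> X'" using nn' n(3) X'(2) by auto
  have lUZ: "ln U Z = l1" using ln_unique[OF ZU[symmetric] l1 U Z] .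
  have lfUfZ: "ln (f U) (f Z) = l2" using ln_unique[of "f U" "f Z" l2] finj[OF U Z] ZU fl2(1) l2 by metis
  have lZX: "ln Z X = n" using n_def by simp
  have stepa: "prl (ln U X) (ln (f U) X')"
  proof -
    have ab: "par U d \<noteq> par Z d" using pinj U Z ZU by metis
    have ac: "par U d \<noteq> k" using pdk U BU by metis
    have bc: "par Z d \<noteq> k" using pdk Z BZ by metis
    have pen: "prl (par U d) (par Z d) \<and> prl (par U d) k" using par[OF d] k(3) prl_trans prl_sym by metis
    have c1: "X \<notin> ln U Z" using lUZ X1 by simp
    have c2: "X' \<notin> ln (f U) (f Z)" using lfUfZ X'l2 by simp
    have fUZ: "f U \<noteq> f Z" using finj[OF U Z] ZU by blast
    have p1: "prl (ln U Z) (ln (f U) (f Z))" using lUZ lfUfZ p12 by simp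
    have p2: "prl (ln Z X) (ln (f Z) X')" using lZX lfZX' n'(3) prl_sym by simp
    show ?thesis
      using DES[OF conjunct1[OF par[OF d]] conjunct1[OF par[OF d]] k(1) ab ac bc _
          conjunct1[OF conjunct2[OF par[OF d]]] fl2(2) Yf[OF U]
          conjunct1[OF conjunct2[OF par[OF d]]] fl2(2) Yf[OF Z] kX X'(1) XX' ZU[symmetric] c1 fUZ c2 p1 p2]
        pen by blast
  qed
  have uX: "ln U X \<in> L" "\<not> prl (ln U X) n" "\<not> prl (ln U X) l1"
    using mul_basics(2,3,4)[OF l1 Z U ZU X1] n_def by auto
  define P1 where "P1 = proj n (ln U X) A"
  have P1: "P1 \<in> n" "P1 \<in> par A (ln U X)" using proj[OF n(1) uX(1,2)] P1_def by auto
  have P1Z: "P1 \<noteq> Z"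
  proof
    assume "P1 = Z"
    then have "proj n (ln U X) A = proj n (ln U X) Z" using proj_on[OF n(1) uX(1,2) n(2)] P1_def by simp
    then show False using proj_inj[OF l1 n(1) uX(1,3,2) A Z] AZ by blast
  qed
  have P1l1: "P1 \<notin> l1" using two_pts[OF l1 n(1) _ P1(1) Z n(2)] P1Z n(4) by metis
  have P1pZ: "P1 \<notin> par Z d"
  proof
    assume a: "P1 \<in> par Z d"
    have "n \<noteq> par Z d" using nd par[OF d] by metis
    then show False using two_pts[OF n(1) conjunct1[OF par[OF d]] P1(1) a n(2) conjunct1[OF conjunct2[OF par[OF d]]]] P1Z by blast
  qed
  have AP1: "A \<noteq> P1" using A P1l1 by auto
  have P1pA: "P1 \<notin> par A d"
  proof
    assume a: "P1 \<in> par A d"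
    have "ln A P1 = par A d" using ln_par[OF d AP1 a] .
    moreover have "ln A P1 = par A (ln U X)" using ln_par[OF uX(1) AP1 P1(2)] .
    ultimately have "prl (ln U X) d" using par[OF d] par[OF uX(1)] prl_trans prl_sym by metis
    moreover have UX: "U \<noteq> X" using X1 U by auto
    ultimately have "X \<in> par U d" using par_mem_iff[OF d UX] by simp
    then have "par U d = k" using par_mem[OF d] Xk k_def by metis
    then show False using pdk U BU by metis
  qed
  have n'd: "\<not> prl d n'" using nprl_trans[OF prl_sym[OF n'(3)]] nd prl_sym by blast
  define Q where "Q = proj n' d P1"
  have Q: "Q \<in> n'" "Q \<in> par P1 d" using proj[OF n'(1) d n'd] Q_def by auto
  have pQ: "par Q d = par P1 d" using par_mem[OF d Q(2)] .
  have QfZ: "Q \<noteq> f Z"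
  proof
    assume "Q = f Z"
    then have "par P1 d = par Z d" using pQ pfZ by simp
    then show False using P1pZ par[OF d, of P1] by metis
  qed
  have Ql2: "Q \<notin> l2" using two_pts[OF n'(1) l2 n'(2) fl2(1) Q(1)] QfZ n'l2 by metis
  have P1Q: "P1 \<noteq> Q" using nn' P1(1) Q(1) by auto
  have lZP1: "ln Z P1 = n" using ln_unique[OF P1Z[symmetric] n(1) n(2) P1(1)] .
  have lfZQ: "ln (f Z) Q = n'" using ln_unique[OF QfZ[symmetric] n'(1) n'(2) Q(1)] .
  have lAZ: "ln A Z = l1" using ln_unique[OF AZ l1 A Z] .
  have lfAfZ: "ln (f A) (f Z) = l2" using ln_unique[of "f A" "f Z" l2] finj[OF A Z] AZ fl2(1) l2 by metis
  have stepb: "prl (ln A P1) (ln (f A) Q)"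
  proof -
    have ab: "par A d \<noteq> par Z d" using pinj A Z AZ by metis
    have ac: "par A d \<noteq> par P1 d" using P1pA par[OF d, of P1] by metis
    have bc: "par Z d \<noteq> par P1 d" using P1pZ par[OF d, of P1] by metis
    have pen: "prl (par A d) (par Z d) \<and> prl (par A d) (par P1 d)" using par[OF d] prl_trans prl_sym by metis
    have p1: "prl (ln A Z) (ln (f A) (f Z))" using lAZ lfAfZ p12 by simp
    have p2: "prl (ln Z P1) (ln (f Z) Q)" using lZP1 lfZQ n'(3) prl_sym by simp
    have c1: "P1 \<notin> ln A Z" using lAZ P1l1 by simp
    have c2: "Q \<notin> ln (f A) (f Z)" using lfAfZ Ql2 by simp
    have fAZ: "f A \<noteq> f Z" using finj[OF A Z] AZ by blast
    show ?thesis
      using DES[OF conjunct1[OF par[OF d]] conjunct1[OF par[OF d]] conjunct1[OF par[OF d]] ab ac bc _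
          conjunct1[OF conjunct2[OF par[OF d]]] fl2(2) Yf[OF A]
          conjunct1[OF conjunct2[OF par[OF d]]] fl2(2) Yf[OF Z]
          conjunct1[OF conjunct2[OF par[OF d]]] Q(2) P1Q AZ c1 fAZ c2 p1 p2] pen by blast
  qed
  have fUX': "f U \<noteq> X'" using X'l2 fl2(1) by metis
  have fAQ: "f A \<noteq> Q" using Ql2 fl2(1) by metis
  have lfUX': "ln (f U) X' \<in> L" using ln[OF fUX'] by simp
  have "ln A P1 = par A (ln U X)" using ln_par[OF uX(1) AP1 P1(2)] .
  then have "prl (ln (f A) Q) (ln (f U) X')"
    using stepa stepb par[OF uX(1)] prl_trans prl_sym by metis
  then have Qpar: "Q \<in> par (f A) (ln (f U) X')" using par_mem_iff[OF lfUX' fAQ] by simp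
  have nfU: "\<not> prl (ln (f U) X') n'"
  proof
    assume "prl (ln (f U) X') n'"
    then have "prl (ln U X) n" using stepa n'(3) prl_trans by blast
    then show False using uX(2) by simp
  qed
  have P1': "proj n' (ln (f U) X') (f A) = Q" using proj_eq[OF n'(1) lfUX' nfU Q(1) Qpar] .
  have fBX': "f B \<noteq> X'" using X'l2 fl2(1) by metis
  have lfBX': "ln (f B) X' = k" using ln_unique[OF fBX' k(1) fBk X'(1)] .
  have lBX: "ln B X = k" using ln_unique[OF XB[symmetric] k(1) k(2) kX] .
  define S where "S = proj l1 k P1"
  have S: "S \<in> par P1 k" using proj[OF l1 k(1) kl1] S_def by blast
  have "par S d = par P1 d" using par_prl[OF k(3)] par_mem[OF k(1) S] by metis
  then have LHS: "f S = f P1" using proj_same f_def by metis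
  have RHS: "proj l2 k Q = f P1" using proj_prl[OF k(3)] proj_same[OF pQ] f_def by metis
  have "f (mulX l1 Z U X A B) = mulX l2 (f Z) (f U) X' (f A) (f B)"
    unfolding mulX_def using LHS RHS lBX lfBX' lfZX' P1' S_def P1_def n_def by metis
  then show ?thesis using X'l2 f_def by blast
qed

end

context dap begin

definition ADD where "ADD l Z A B = addX l Z (aux_point l) A B"
definition MUL where "MUL l Z U A B = mulX l Z U (aux_point l) A B"

definition iso where
  "iso f l1 Z U l2 Z' U' \<longleftrightarrow> (\<forall>A\<in>l1. \<forall>B\<in>l1. f (ADD l1 Z A B) = ADD l2 Z' (f A) (f B) \<and>
      f (MUL l1 Z U A B) = MUL l2 Z' U' (f A) (f B))"

lemma off_k: assumes "l \<in> L" "d \<in> L" "\<not> prl d l" "B \<in> l" "X \<in> par B d" "X \<noteq> B" shows "X \<notin> l"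
proof
  assume X: "X \<in> l"
  have "par B d \<noteq> l" using par[OF assms(2)] assms(3) prl_sym by metis
  then show False using two_pts[OF assms(1) conjunct1[OF par[OF assms(2)]] X assms(5) assms(4)] par[OF assms(2)] assms(6)
    by blast
qed

lemma pick3: assumes "rich" "k \<in> L" shows "\<exists>X. X \<in> k \<and> X \<noteq> P \<and> X \<noteq> Q"
proof -
  obtain P1 P2 P3 where "P1 \<in> k" "P2 \<in> k" "P3 \<in> k" "P1 \<noteq> P2" "P1 \<noteq> P3" "P2 \<noteq> P3"
    using assms unfolding rich_def by blast
  then show ?thesis by metis
qed

lemma isoP:
  assumes r: "rich" and l1: "l1 \<in> L" and l2: "l2 \<in> L" and p12: "prl l1 l2" and ne: "l1 \<noteq> l2"
    and d: "d \<in> L" and d1: "\<not> prl d l1" and Z: "Z \<in> l1" and U: "U \<in> l1" and ZU: "Z \<noteq> U"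
  shows "iso (proj l2 d) l1 Z U l2 (proj l2 d Z) (proj l2 d U)"
  unfolding iso_def
proof (intro ballI conjI)
  have d2: "\<not> prl d l2" using nprl_trans[OF p12 d1] .
  have fl2: "\<And>Y. proj l2 d Y \<in> l2" "\<And>Y. proj l2 d Y \<in> par Y d" using proj[OF l2 d d2] by auto
  have finj: "\<And>Y1 Y2. Y1 \<in> l1 \<Longrightarrow> Y2 \<in> l1 \<Longrightarrow> proj l2 d Y1 = proj l2 d Y2 \<Longrightarrow> Y1 = Y2"
    using proj_inj[OF l1 l2 d d1 d2] by blast
  have fZU: "proj l2 d Z \<noteq> proj l2 d U" using finj[OF Z U] ZU by blast
  have a1: "aux_point l1 \<notin> l1" using aux_point[OF l1] .
  have a2: "aux_point l2 \<notin> l2" using aux_point[OF l2] .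
  fix A B assume A: "A \<in> l1" and B: "B \<in> l1"
  show "proj l2 d (ADD l1 Z A B) = ADD l2 (proj l2 d Z) (proj l2 d A) (proj l2 d B)"
  proof -
    obtain X where X: "X \<notin> l1" "X \<notin> l2" using off_two[OF r l1 l2] by blast
    have "ADD l1 Z A B = addX l1 Z X A B" unfolding ADD_def using addind[OF r l1 Z A B a1 X(1)] .
    moreover have "ADD l2 (proj l2 d Z) (proj l2 d A) (proj l2 d B) = addX l2 (proj l2 d Z) X (proj l2 d A) (proj l2 d B)"
      unfolding ADD_def using addind[OF r l2 fl2(1) fl2(1) fl2(1) a2 X(2)] .
    ultimately show ?thesis using kindP_add[OF l1 l2 p12 ne d d1 Z A B X] by simp
  qed
  show "proj l2 d (MUL l1 Z U A B) = MUL l2 (proj l2 d Z) (proj l2 d U) (proj l2 d A) (proj l2 d B)"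
  proof -
    note m1 = mul_Z_right[OF l1 Z U ZU a1] mul_U_right[OF l1 Z U ZU a1] mul_Z_left[OF l1 Z U ZU a1] mul_U_left[OF l1 Z U ZU a1]
    note m2 = mul_Z_right[OF l2 fl2(1) fl2(1) fZU a2] mul_U_right[OF l2 fl2(1) fl2(1) fZU a2]
      mul_Z_left[OF l2 fl2(1) fl2(1) fZU a2] mul_U_left[OF l2 fl2(1) fl2(1) fZU a2]
    show ?thesis
    proof (cases "B = Z \<or> B = U \<or> A = Z \<or> A = U")
      case True
      then show ?thesis unfolding MUL_def using m1 m2 A B fl2(1) by auto
    next
      case False
      then have BZ: "B \<noteq> Z" "B \<noteq> U" "A \<noteq> Z" "A \<noteq> U" by auto
      obtain X where X: "X \<in> par B d" "X \<noteq> B" "X \<noteq> proj l2 d B"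
        using pick3[OF r conjunct1[OF par[OF d]]] by blast
      have X1: "X \<notin> l1" using off_k[OF l1 d d1 B X(1,2)] .
      obtain X' where X': "X' \<notin> l2" "proj l2 d (mulX l1 Z U X A B) =
           mulX l2 (proj l2 d Z) (proj l2 d U) X' (proj l2 d A) (proj l2 d B)"
        using kindP_mul[OF l1 l2 p12 ne d d1 Z U ZU A B BZ X] by blast
      have "MUL l1 Z U A B = mulX l1 Z U X A B" unfolding MUL_def using mulind[OF l1 Z U ZU A B a1 X1] .
      moreover have "MUL l2 (proj l2 d Z) (proj l2 d U) (proj l2 d A) (proj l2 d B) =
          mulX l2 (proj l2 d Z) (proj l2 d U) X' (proj l2 d A) (proj l2 d B)"
        unfolding MUL_def using mulind[OF l2 fl2(1) fl2(1) fZU fl2(1) fl2(1) a2 X'(1)] .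
      ultimately show ?thesis using X'(2) by simp
    qed
  qed
qed

lemma isoC:
  assumes r: "rich" and l1: "l1 \<in> L" and l3: "l3 \<in> L" and ne: "l1 \<noteq> l3"
    and d: "d \<in> L" and d1: "\<not> prl d l1" and d3: "\<not> prl d l3"
    and Z1: "Z \<in> l1" and Z3: "Z \<in> l3" and U: "U \<in> l1" and ZU: "Z \<noteq> U"
  shows "iso (proj l3 d) l1 Z U l3 (proj l3 d Z) (proj l3 d U)"
  unfolding iso_def
proof (intro ballI conjI)
  have gZ: "proj l3 d Z = Z" using proj_on[OF l3 d d3 Z3] .
  have fl2: "\<And>Y. proj l3 d Y \<in> l3" "\<And>Y. proj l3 d Y \<in> par Y d" using proj[OF l3 d d3] by auto
  have finj: "\<And>Y1 Y2. Y1 \<in> l1 \<Longrightarrow> Y2 \<in> l1 \<Longrightarrow> proj l3 d Y1 = proj l3 d Y2 \<Longrightarrow> Y1 = Y2"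
    using proj_inj[OF l1 l3 d d1 d3] by blast
  have a1: "aux_point l1 \<notin> l1" using aux_point[OF l1] .
  have a3: "aux_point l3 \<notin> l3" using aux_point[OF l3] .
  fix A B assume A: "A \<in> l1" and B: "B \<in> l1"
  show "proj l3 d (ADD l1 Z A B) = ADD l3 (proj l3 d Z) (proj l3 d A) (proj l3 d B)"
  proof (cases "B = Z")
    case True
    then show ?thesis unfolding ADD_def using add_Z_right[OF l1 Z1 a1 A] add_Z_right[OF l3 Z3 a3 fl2(1)] gZ by simp
  next
    case BZ: False
    obtain X where X: "X \<in> par B d" "X \<noteq> B" "X \<noteq> proj l3 d B"
      using pick3[OF r conjunct1[OF par[OF d]]] by blast
    have X1: "X \<notin> l1" using off_k[OF l1 d d1 B X(1,2)] .
    have "X \<in> par (proj l3 d B) d" using par_mem[OF d fl2(2)] X(1) by simp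
    then have X3: "X \<notin> l3" using off_k[OF l3 d d3 fl2(1) _ X(3)] by blast
    have "ADD l1 Z A B = addX l1 Z X A B" unfolding ADD_def using addind[OF r l1 Z1 A B a1 X1] .
    moreover have "ADD l3 Z (proj l3 d A) (proj l3 d B) = addX l3 Z X (proj l3 d A) (proj l3 d B)"
      unfolding ADD_def using addind[OF r l3 Z3 fl2(1) fl2(1) a3 X3] .
    ultimately show ?thesis using kindC_add[OF l1 l3 ne d d1 d3 Z1 Z3 A B BZ X] gZ by simp
  qed
  show "proj l3 d (MUL l1 Z U A B) = MUL l3 (proj l3 d Z) (proj l3 d U) (proj l3 d A) (proj l3 d B)"
  proof -
    have ZgU: "Z \<noteq> proj l3 d U" using finj[OF Z1 U] gZ ZU by metis
    obtain X where X: "X \<notin> l1" "X \<notin> l3" using off_two[OF r l1 l3] by blast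
    have "MUL l1 Z U A B = mulX l1 Z U X A B" unfolding MUL_def using mulind[OF l1 Z1 U ZU A B a1 X(1)] .
    moreover have "MUL l3 Z (proj l3 d U) (proj l3 d A) (proj l3 d B) = mulX l3 Z (proj l3 d U) X (proj l3 d A) (proj l3 d B)"
      unfolding MUL_def using mulind[OF l3 Z3 fl2(1) ZgU fl2(1) fl2(1) a3 X(2)] .
    ultimately show ?thesis using kindC_mul[OF l1 l3 ne d d1 d3 Z1 Z3 U ZU A B X] gZ by simp
  qed
qed

lemma ADD_in: "l \<in> L \<Longrightarrow> Z \<in> l \<Longrightarrow> B \<in> l \<Longrightarrow> ADD l Z A B \<in> l"
  unfolding ADD_def using add_in aux_point by blast

lemma MUL_in: "l \<in> L \<Longrightarrow> Z \<in> l \<Longrightarrow> U \<in> l \<Longrightarrow> Z \<noteq> U \<Longrightarrow> B \<in> l \<Longrightarrow> MUL l Z U A B \<in> l"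
  unfolding MUL_def using mul_in aux_point by blast

lemma iso_comp:
  assumes "iso g l1 Z U l3 Z3 U3" "iso h l3 Z3 U3 l2 Z2 U2" "\<And>X. X \<in> l1 \<Longrightarrow> g X \<in> l3"
    "l1 \<in> L" "Z \<in> l1" "U \<in> l1" "Z \<noteq> U"
  shows "iso (\<lambda>X. h (g X)) l1 Z U l2 Z2 U2"
  using assms ADD_in MUL_in unfolding iso_def by simp

lemma iso_cong:
  assumes "iso f' l1 Z U l2 Z2 U2" "\<And>X. X \<in> l1 \<Longrightarrow> f X = f' X"
    "l1 \<in> L" "Z \<in> l1" "U \<in> l1" "Z \<noteq> U"
  shows "iso f l1 Z U l2 Z2 U2"
  using assms ADD_in MUL_in unfolding iso_def by simp

end

context dap begin

lemma rich_from: assumes l: "l \<in> L" and P: "P \<in> l" "Q \<in> l" "R \<in> l" "P \<noteq> Q" "P \<noteq> R" "Q \<noteq> R"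
  shows rich
  unfolding rich_def
proof
  fix k assume k: "k \<in> L"
  show "\<exists>P Q R. P \<in> k \<and> Q \<in> k \<and> R \<in> k \<and> P \<noteq> Q \<and> P \<noteq> R \<and> Q \<noteq> R"
  proof (cases "k = l")
    case True
    then show ?thesis using P by blast
  next
    case False
    obtain P0 where P0: "P0 \<in> l" "P0 \<notin> k" using other_than[OF l k] False by metis
    obtain Q0 where Q0: "Q0 \<in> k" "Q0 \<notin> l" using other_than[OF k l False] by blast
    have PQ: "P0 \<noteq> Q0" using P0 Q0 by auto
    have e: "ln P0 Q0 \<in> L" "P0 \<in> ln P0 Q0" "Q0 \<in> ln P0 Q0" using ln[OF PQ] by auto
    have el: "\<not> prl (ln P0 Q0) l" using not_prl[OF e(1) l e(2) P0(1)] e(3) Q0(2) by blast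
    have ek: "\<not> prl (ln P0 Q0) k" using not_prl[OF e(1) k e(3) Q0(1)] e(2) P0(2) by blast
    have inj: "\<And>Y1 Y2. Y1 \<in> l \<Longrightarrow> Y2 \<in> l \<Longrightarrow> proj k (ln P0 Q0) Y1 = proj k (ln P0 Q0) Y2 \<Longrightarrow> Y1 = Y2"
      using proj_inj[OF l k e(1) el ek] by blast
    have "proj k (ln P0 Q0) P \<in> k" "proj k (ln P0 Q0) Q \<in> k" "proj k (ln P0 Q0) R \<in> k"
      using proj[OF k e(1) ek] by auto
    then show ?thesis using inj P by metis
  qed
qed

lemma two_point_tables:
  assumes l: "l \<in> L" and Z: "Z \<in> l" and U: "U \<in> l" and ZU: "Z \<noteq> U" and all: "\<forall>Y\<in>l. Y = Z \<or> Y = U"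
  shows "ADD l Z Z Z = Z" "ADD l Z Z U = U" "ADD l Z U Z = U" "ADD l Z U U = Z"
    "MUL l Z U Z Z = Z" "MUL l Z U Z U = Z" "MUL l Z U U Z = Z" "MUL l Z U U U = U"
proof -
  have a: "aux_point l \<notin> l" using aux_point[OF l] .
  show "ADD l Z Z Z = Z" "ADD l Z Z U = U" "ADD l Z U Z = U"
    unfolding ADD_def using add_Z_left[OF l Z a] add_Z_right[OF l Z a] Z U by auto
  show "ADD l Z U U = Z"
  proof -
    have i: "ADD l Z U U \<in> l" using ADD_in[OF l Z U] .
    have "ADD l Z U U \<noteq> U"
    proof
      assume "ADD l Z U U = U"
      then have "addX l Z (aux_point l) U U = addX l Z (aux_point l) Z U"
        unfolding ADD_def using add_Z_left[OF l Z a U] by simp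
      then show False using add_inj_left[OF l Z a U Z U] ZU by blast
    qed
    then show ?thesis using i all by blast
  qed
  show "MUL l Z U Z Z = Z" "MUL l Z U Z U = Z" "MUL l Z U U Z = Z" "MUL l Z U U U = U"
    unfolding MUL_def using mul_Z_left[OF l Z U ZU a] mul_Z_right[OF l Z U ZU a] mul_U_left[OF l Z U ZU a] Z U
    by auto
qed

lemma isoMain:
  assumes l1: "l1 \<in> L" and l2: "l2 \<in> L" and Z: "Z \<in> l1" and U: "U \<in> l1" and ZU: "Z \<noteq> U"
    and d: "d \<in> L" and d1: "\<not> prl d l1" and d2: "\<not> prl d l2"
  shows "iso (proj l2 d) l1 Z U l2 (proj l2 d Z) (proj l2 d U)"
proof -
  have fl2: "\<And>Y. proj l2 d Y \<in> l2" "\<And>Y. proj l2 d Y \<in> par Y d" using proj[OF l2 d d2] by auto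
  have finj: "\<And>Y1 Y2. Y1 \<in> l1 \<Longrightarrow> Y2 \<in> l1 \<Longrightarrow> proj l2 d Y1 = proj l2 d Y2 \<Longrightarrow> Y1 = Y2"
    using proj_inj[OF l1 l2 d d1 d2] by blast
  show ?thesis
  proof (cases "l1 = l2")
    case True
    have "iso (\<lambda>X. X) l1 Z U l1 Z U" unfolding iso_def by simp
    moreover have "\<And>X. X \<in> l1 \<Longrightarrow> proj l2 d X = X" using proj_on[OF l2 d d2] True by simp
    ultimately show ?thesis using iso_cong[of "\<lambda>X. X" l1 Z U l1 Z U "proj l2 d"] l1 Z U ZU True by simp
  next
    case ne: False
    show ?thesis
    proof (cases rich)
      case False
      have all1: "\<forall>Y\<in>l1. Y = Z \<or> Y = U" using rich_from[OF l1 Z U _ ZU] False by metis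
      have fZU: "proj l2 d Z \<noteq> proj l2 d U" using finj[OF Z U] ZU by blast
      have all2: "\<forall>Y\<in>l2. Y = proj l2 d Z \<or> Y = proj l2 d U"
      proof
        fix Y assume Y: "Y \<in> l2"
        have Y0: "proj l1 d Y \<in> l1" "proj l1 d Y \<in> par Y d" using proj[OF l1 d d1] by auto
        have "proj l2 d (proj l1 d Y) = proj l2 d Y" using proj_same par_mem[OF d Y0(2)] by blast
        also have "\<dots> = Y" using proj_on[OF l2 d d2 Y] .
        finally show "Y = proj l2 d Z \<or> Y = proj l2 d U" using all1 Y0(1) by metis
      qed
      note t1 = two_point_tables[OF l1 Z U ZU all1]
      note t2 = two_point_tables[OF l2 fl2(1) fl2(1) fZU all2]
      show ?thesis unfolding iso_def
      proof (intro ballI)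
        fix A B assume "A \<in> l1" "B \<in> l1"
        then have "(A = Z \<or> A = U) \<and> (B = Z \<or> B = U)" using all1 by blast
        then show "proj l2 d (ADD l1 Z A B) = ADD l2 (proj l2 d Z) (proj l2 d A) (proj l2 d B) \<and>
          proj l2 d (MUL l1 Z U A B) = MUL l2 (proj l2 d Z) (proj l2 d U) (proj l2 d A) (proj l2 d B)"
          using t1 t2 by auto
      qed
    next
      case r: True
      define l3 where "l3 = par Z l2"
      have l3: "l3 \<in> L" "Z \<in> l3" "prl l3 l2" using par[OF l2] l3_def by auto
      show ?thesis
      proof (cases "l3 = l1")
        case True
        then show ?thesis using isoP[OF r l1 l2 _ ne d d1 Z U ZU] l3 by simp
      next
        case n13: False
        have d3: "\<not> prl d l3" using nprl_trans[OF prl_sym[OF l3(3)] d2] .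
        have isog: "iso (proj l3 d) l1 Z U l3 (proj l3 d Z) (proj l3 d U)"
          using isoC[OF r l1 l3(1) n13[symmetric] d d1 d3 Z l3(2) U ZU] .
        have gZ: "proj l3 d Z = Z" using proj_on[OF l3(1) d d3 l3(2)] .
        show ?thesis
        proof (cases "l3 = l2")
          case True
          then show ?thesis using isog by simp
        next
          case n32: False
          have gU: "proj l3 d U \<in> l3" using proj[OF l3(1) d d3] by blast
          have ZgU: "Z \<noteq> proj l3 d U" using proj_inj[OF l1 l3(1) d d1 d3 Z U] gZ ZU by metis
          have isoh: "iso (proj l2 d) l3 Z (proj l3 d U) l2 (proj l2 d Z) (proj l2 d (proj l3 d U))"
            using isoP[OF r l3(1) l2 l3(3) n32 d d3 l3(2) gU ZgU] .
          have c: "iso (\<lambda>X. proj l2 d (proj l3 d X)) l1 Z U l2 (proj l2 d Z) (proj l2 d (proj l3 d U))"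
            using iso_comp[OF isog[unfolded gZ] isoh _ l1 Z U ZU] proj[OF l3(1) d d3] by blast
          have e: "\<And>X. proj l2 d (proj l3 d X) = proj l2 d X"
            using proj_same par_mem[OF d] proj[OF l3(1) d d3] by blast
          show ?thesis using iso_cong[OF c _ l1 Z U ZU, of "proj l2 d"] e by simp
        qed
      qed
    qed
  qed
qed

definition NEG where "NEG l Z X = (THE Y. Y \<in> l \<and> ADD l Z X Y = Z)"
definition INV where "INV l Z U X = (THE Y. Y \<in> l \<and> MUL l Z U X Y = U)"
definition SUB where "SUB l Z X Y = ADD l Z X (NEG l Z Y)"
definition CR where "CR l Z U A B C D =
   MUL l Z U (MUL l Z U (INV l Z U (SUB l Z A D)) (SUB l Z B D)) (MUL l Z U (INV l Z U (SUB l Z B C)) (SUB l Z A C))"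

lemma cross_ratio_CR: "cross_ratio L Z U A B C D = CR (ln Z U) Z U A B C D"
  unfolding cross_ratio_def CR_def SUB_def sub_pt_def NEG_def neg_pt_def INV_def inv_pt_def
    add_pt_addX mul_pt_mulX ADD_def MUL_def by simp

lemma NEG: assumes "l \<in> L" "Z \<in> l" "X \<in> l" shows "NEG l Z X \<in> l \<and> ADD l Z X (NEG l Z X) = Z"
  unfolding NEG_def ADD_def using theI'[OF add_solve[OF assms(1,2) aux_point[OF assms(1)] assms(3,2)]] .

lemma INV: assumes "l \<in> L" "Z \<in> l" "U \<in> l" "Z \<noteq> U" "X \<in> l" "X \<noteq> Z"
  shows "INV l Z U X \<in> l \<and> MUL l Z U X (INV l Z U X) = U"
  unfolding INV_def MUL_def using theI'[OF mul_solve[OF assms(1-4) aux_point[OF assms(1)] assms(5,6,3)]] .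

lemma SUB_in: "l \<in> L \<Longrightarrow> Z \<in> l \<Longrightarrow> Y \<in> l \<Longrightarrow> SUB l Z X Y \<in> l"
  unfolding SUB_def using ADD_in NEG by blast

lemma SUB_ne: assumes "l \<in> L" "Z \<in> l" "X \<in> l" "Y \<in> l" "X \<noteq> Y" shows "SUB l Z X Y \<noteq> Z"
proof
  assume "SUB l Z X Y = Z"
  then have "ADD l Z X (NEG l Z Y) = ADD l Z Y (NEG l Z Y)" using NEG[OF assms(1,2,4)] SUB_def by simp
  then show False using add_inj_left[OF assms(1,2) aux_point[OF assms(1)] assms(3,4)] NEG[OF assms(1,2,4)] assms(5)
    unfolding ADD_def by blast
qed

context
  fixes f l1 l2 Z U
  assumes l1: "l1 \<in> L" and l2: "l2 \<in> L" and Z: "Z \<in> l1" and U: "U \<in> l1" and ZU: "Z \<noteq> U"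
    and fl: "\<And>X. X \<in> l1 \<Longrightarrow> f X \<in> l2" and finj: "inj_on f l1"
    and iso: "iso f l1 Z U l2 (f Z) (f U)"
begin

lemma fADD: "A \<in> l1 \<Longrightarrow> B \<in> l1 \<Longrightarrow> f (ADD l1 Z A B) = ADD l2 (f Z) (f A) (f B)"
  using iso unfolding iso_def by blast
lemma fMUL: "A \<in> l1 \<Longrightarrow> B \<in> l1 \<Longrightarrow> f (MUL l1 Z U A B) = MUL l2 (f Z) (f U) (f A) (f B)"
  using iso unfolding iso_def by blast

lemma fNEG: assumes X: "X \<in> l1" shows "f (NEG l1 Z X) = NEG l2 (f Z) (f X)"
proof -
  have n: "NEG l1 Z X \<in> l1" "ADD l1 Z X (NEG l1 Z X) = Z" using NEG[OF l1 Z X] by auto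
  have "f (NEG l1 Z X) \<in> l2 \<and> ADD l2 (f Z) (f X) (f (NEG l1 Z X)) = f Z" using fl n fADD[OF X n(1)] by simp
  then show ?thesis unfolding NEG_def ADD_def
    using the1_equality[OF add_solve[OF l2 fl[OF Z] aux_point[OF l2] fl[OF X] fl[OF Z]]] unfolding ADD_def by metis
qed

lemma fSUB: "X \<in> l1 \<Longrightarrow> Y \<in> l1 \<Longrightarrow> f (SUB l1 Z X Y) = SUB l2 (f Z) (f X) (f Y)"
  unfolding SUB_def using fADD NEG[OF l1 Z] fNEG by simp

lemma fINV: assumes X: "X \<in> l1" "X \<noteq> Z" shows "f (INV l1 Z U X) = INV l2 (f Z) (f U) (f X)"
proof -
  have n: "INV l1 Z U X \<in> l1" "MUL l1 Z U X (INV l1 Z U X) = U" using INV[OF l1 Z U ZU X] by auto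
  have "f (INV l1 Z U X) \<in> l2 \<and> MUL l2 (f Z) (f U) (f X) (f (INV l1 Z U X)) = f U" using fl n fMUL[OF X(1) n(1)] by simp
  moreover have "f Z \<noteq> f U" "f X \<noteq> f Z" using finj ZU X Z U unfolding inj_on_def by auto
  ultimately show ?thesis unfolding INV_def MUL_def
    using the1_equality[OF mul_solve[OF l2 fl[OF Z] fl[OF U] _ aux_point[OF l2] fl[OF X(1)] _ fl[OF U]]] unfolding MUL_def
    by metis
qed

lemma fCR: assumes "A \<in> l1" "B \<in> l1" "C \<in> l1" "D \<in> l1" "A \<noteq> D" "B \<noteq> C"
  shows "f (CR l1 Z U A B C D) = CR l2 (f Z) (f U) (f A) (f B) (f C) (f D)"
proof -
  have s: "SUB l1 Z A D \<in> l1" "SUB l1 Z B D \<in> l1" "SUB l1 Z B C \<in> l1" "SUB l1 Z A C \<in> l1"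
    using SUB_in[OF l1 Z] assms by auto
  have ne: "SUB l1 Z A D \<noteq> Z" "SUB l1 Z B C \<noteq> Z" using SUB_ne[OF l1 Z] assms by auto
  have i: "INV l1 Z U (SUB l1 Z A D) \<in> l1" "INV l1 Z U (SUB l1 Z B C) \<in> l1"
    using INV[OF l1 Z U ZU] s ne by auto
  have m: "MUL l1 Z U (INV l1 Z U (SUB l1 Z A D)) (SUB l1 Z B D) \<in> l1"
      "MUL l1 Z U (INV l1 Z U (SUB l1 Z B C)) (SUB l1 Z A C) \<in> l1"
    using MUL_in[OF l1 Z U ZU] s by auto
  show ?thesis unfolding CR_def
    using fMUL[OF m] fMUL[OF i(1) s(2)] fMUL[OF i(2) s(4)] fINV s ne fSUB assms by simp
qed

end

end

theorem mainTheorem6: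
  fixes L :: "'p set set" and l1 l2 :: "'p set" and f :: "'p \<Rightarrow> 'p"
    and Z U A B C D :: 'p
  assumes "desargues_affine_plane L"
    and "l1 \<in> L" and "l2 \<in> L"
    and "Z \<in> l1" and "U \<in> l1" and "Z \<noteq> U"
    and "parallel_projection L l1 l2 f"
    and "A \<in> l1" and "B \<in> l1" and "C \<in> l1" and "D \<in> l1"
    and "A \<noteq> D" and "B \<noteq> C"
  shows "f (cross_ratio L Z U A B C D) =
         cross_ratio L (f Z) (f U) (f A) (f B) (f C) (f D)"
proof -
  interpret dap L using assms(1,6) by unfold_locales blast+
  obtain d where d: "d \<in> L" "\<not> parallel L d l1" "\<forall>X\<in>l1. f X \<in> l2 \<and> f X \<in> par_through L X d"
    using assms(7) unfolding parallel_projection_def by blast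
  have d2: "\<not> parallel L d l2"
  proof
    assume p: "parallel L d l2"
    have "\<And>X. X \<in> l1 \<Longrightarrow> par_through L X d = l2"
    proof -
      fix X assume X: "X \<in> l1"
      have "parallel L (par_through L X d) l2" using par[OF d(1)] p prl_trans by blast
      then show "par_through L X d = l2" using prl_meet d(3) X by blast
    qed
    then have "U \<in> par_through L Z d" using assms(4,5) par[OF d(1)] by metis
    then have "par_through L Z d = l1" using two_pts[OF conjunct1[OF par[OF d(1)]] assms(2) _ assms(4) _ assms(5)]
        par[OF d(1)] assms(6) by blast
    then show False using par[OF d(1)] d(2) prl_sym by metis
  qed
  have fe: "\<And>X. X \<in> l1 \<Longrightarrow> f X = proj l2 d X" using proj_eq[OF assms(3) d(1) d2] d(3) by metis
  have fl: "\<And>X. X \<in> l1 \<Longrightarrow> f X \<in> l2" using d(3) by blast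
  have finj: "inj_on f l1" unfolding inj_on_def using fe proj_inj[OF assms(2,3) d(1,2) d2] by metis
  have iso0: "iso (proj l2 d) l1 Z U l2 (proj l2 d Z) (proj l2 d U)"
    using isoMain[OF assms(2,3,4,5,6) d(1,2) d2] .
  have isof: "iso f l1 Z U l2 (f Z) (f U)"
    using iso_cong[OF iso0 fe assms(2,4,5,6)] fe[OF assms(4)] fe[OF assms(5)] by simp
  have lZU: "line_through L Z U = l1" using ln_unique[OF assms(6,2,4,5)] .
  have fZU: "f Z \<noteq> f U" using finj assms(4,5,6) unfolding inj_on_def by blast
  have lfZU: "line_through L (f Z) (f U) = l2" using ln_unique[OF fZU assms(3) fl[OF assms(4)] fl[OF assms(5)]] .
  show ?thesis unfolding cross_ratio_CR lZU lfZU
    using fCR[OF assms(2,3,4,5,6) fl finj isof assms(8-13)] .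
qed

end
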